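(* Let $M\subset A^r$ be a finitely generated graded right $A$-submodule with minimal homogeneous basis $g_1,\dots,g_s$ of degrees $\Delta_j=\deg g_j\le d$ for a fixed integer $d$, let $K$ be the right syzygy module of $\{g_j\}$ (kernel of $\bigoplus_jA[-\Delta_j]\to A^r$, $\epsilon_j\mapsto g_j$), $g'_j=\iota(g_j)\in S(d)^r$, and let $K'_{|d}=\{\sum_j\epsilon'_jf'_j\mid f'_j\in S(d),\ \sum_jg'_jf'_j=0\}\subset\bigoplus_jS(d)[-\Delta_j]$. Let $B=\{\epsilon'_jx_{kl}\mid 1\le j\le s,1\le k\le n,1\le l\le\Delta_j\}$. If $B\cup\{h'_k\}$ is a minimal homogeneous basis of the $S(d)$-module $K'_{|d}$ with each $h'_k$ in the image of the module letterplace embedding $\iota$, and $h_k=\iota^{-1}(h'_k)$, then $\{h_k\}$ is a minimal homogeneous basis of $K$ in all degrees $\le d$, i.e. the $h_k$ form exactly the elements of degree $\le d$ of some minimal homogeneous basis of $K$.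
   Context: Let $\mathbb K$ be a field, $F=\mathbb K\langle x_1,\dots,x_n\rangle$ with standard grading, $I\subset F$ a graded two-sided ideal, $A=F/I$, $A[-\delta]_d=A_{d-\delta}$; $A^r$ has basis $e_i$ (degree 0), $\bigoplus_jA[-\Delta_j]$ has basis $\epsilon_j$ (degree $\Delta_j$). Let $P=\mathbb K[x_{ij}\mid1\le i\le n,j\ge1]$ (commutative, $\deg x_{ij}=1$), $Q$ the ideal generated by all $x_{ij}x_{kj}$, $R=P/Q$, $\sigma:x_{ij}\mapsto x_{i,j+1}$, $\iota:F\to R$ the $\mathbb K$-linear map $x_{i_1}\cdots x_{i_e}\mapsto x_{i_11}\cdots x_{i_ee}$, $J$ the ideal of $R$ generated by $\bigcup_{k\ge0}\sigma^k(\iota(I))$, $S=R/J$ (with induced $\sigma$ and induced injective linear $\iota:A\to S$). $S(d)$ is the subalgebra of $S$ generated by cosets of $x_{ij}$ with $j\le d$ (a quotient of the finitely generated polynomial ring $\mathbb K[x_{ij}\mid j\le d]$). $\bigoplus_jS(d)[-\Delta_j]$ is the free $S(d)$-module with basis $\epsilon'_j$ of degree $\Delta_j$. The module letterplace embedding of $\bigoplus_iA[-\delta_i]$ into $\bigoplus_iS[-\delta_i]$ (bases $e_i$, $e'_i$) is the $\mathbb K$-linear map $e_if\mapsto e'_i\sigma^{\delta_i}(\iota(f))$. Minimal basis: homogeneous generating set with no element in the submodule generated by the others. *)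

theory Defs
  imports "HOL-Library.Poly_Mapping"
begin

text \<open>Noncommutative polynomials: finitely supported maps from words (lists of
variable indices, variable x_i encoded as the letter i, 1 <= i <= n) to K.\<close>
type_synonym 'k fpoly = "nat list \<Rightarrow>\<^sub>0 'k"

definition fmul :: "('k::ring) fpoly \<Rightarrow> 'k fpoly \<Rightarrow> 'k fpoly" where
  "fmul p q = (\<Sum>u\<in>Poly_Mapping.keys p. \<Sum>v\<in>Poly_Mapping.keys q. Poly_Mapping.single (u @ v) (Poly_Mapping.lookup p u * Poly_Mapping.lookup q v))"

definition Fcar :: "nat \<Rightarrow> 'k::zero fpoly set" where
  "Fcar n = {p. \<forall>w\<in>Poly_Mapping.keys p. set w \<subseteq> {1..n}}"

definition fhom :: "nat \<Rightarrow> 'k::zero fpoly \<Rightarrow> bool" where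
  "fhom e p \<longleftrightarrow> (\<forall>w\<in>Poly_Mapping.keys p. length w = e)"

definition fcomp :: "nat \<Rightarrow> 'k::comm_monoid_add fpoly \<Rightarrow> 'k fpoly" where
  "fcomp e p = (\<Sum>w\<in>{w\<in>Poly_Mapping.keys p. length w = e}. Poly_Mapping.single w (Poly_Mapping.lookup p w))"

definition graded_ideal :: "nat \<Rightarrow> ('k::ring) fpoly set \<Rightarrow> bool" where
  "graded_ideal n I \<longleftrightarrow> I \<subseteq> Fcar n \<and> 0 \<in> I \<and>
     (\<forall>p\<in>I. \<forall>q\<in>I. p + q \<in> I) \<and>
     (\<forall>p\<in>I. \<forall>a\<in>Fcar n. fmul a p \<in> I \<and> fmul p a \<in> I) \<and>
     (\<forall>p\<in>I. \<forall>e. fcomp e p \<in> I)"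

text \<open>Elements of A, A^r and of the free module (+)_j A[-Delta_j] are represented
by representatives in F; two representatives are equal in A iff their difference
lies in I.  Vectors are functions on indices, only indices 1..m are relevant.\<close>
definition vequivA :: "'k::ab_group_add fpoly set \<Rightarrow> nat \<Rightarrow> (nat \<Rightarrow> 'k fpoly) \<Rightarrow> (nat \<Rightarrow> 'k fpoly) \<Rightarrow> bool" where
  "vequivA I m v w \<longleftrightarrow> (\<forall>i\<in>{1..m}. v i - w i \<in> I)"

definition rspanA :: "nat \<Rightarrow> ('k::ring) fpoly set \<Rightarrow> nat \<Rightarrow> (nat \<Rightarrow> 'k fpoly) set \<Rightarrow> (nat \<Rightarrow> 'k fpoly) \<Rightarrow> bool" where
  "rspanA n I m G v \<longleftrightarrow> (\<exists>gs as. length as = length gs \<and> set gs \<subseteq> G \<and> set as \<subseteq> Fcar n \<and>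
      vequivA I m v (\<lambda>i. \<Sum>t<length gs. fmul ((gs ! t) i) (as ! t)))"

text \<open>Homogeneous element of degree e of (+)_{j=1..s} A[-Delta_j]
(basis eps_j of degree Delta_j), up to equality in A.\<close>
definition homA :: "'k::ab_group_add fpoly set \<Rightarrow> nat \<Rightarrow> (nat \<Rightarrow> nat) \<Rightarrow> nat \<Rightarrow> (nat \<Rightarrow> 'k fpoly) \<Rightarrow> bool" where
  "homA I s \<Delta> e v \<longleftrightarrow> (\<exists>w. vequivA I s v w \<and>
     (\<forall>j\<in>{1..s}. if \<Delta> j \<le> e then fhom (e - \<Delta> j) (w j) else w j = 0))"

text \<open>The right syzygy module K of g_1..g_s in A^r (g j i = i-th component of g_j).\<close>
definition syzA :: "nat \<Rightarrow> ('k::ring) fpoly set \<Rightarrow> nat \<Rightarrow> nat \<Rightarrow> (nat \<Rightarrow> nat \<Rightarrow> 'k fpoly) \<Rightarrow> (nat \<Rightarrow> 'k fpoly) \<Rightarrow> bool" where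
  "syzA n I r s g v \<longleftrightarrow> (\<forall>j\<in>{1..s}. v j \<in> Fcar n) \<and>
     (\<forall>i\<in>{1..r}. (\<Sum>j=1..s. fmul (g j i) (v j)) \<in> I)"

definition minbasis_syzA :: "nat \<Rightarrow> ('k::ring) fpoly set \<Rightarrow> nat \<Rightarrow> nat \<Rightarrow> (nat \<Rightarrow> nat)
     \<Rightarrow> (nat \<Rightarrow> nat \<Rightarrow> 'k fpoly) \<Rightarrow> (nat \<Rightarrow> 'k fpoly) set \<Rightarrow> bool" where
  "minbasis_syzA n I r s \<Delta> g H \<longleftrightarrow>
     (\<forall>h\<in>H. syzA n I r s g h) \<and>
     (\<forall>h\<in>H. \<exists>e. homA I s \<Delta> e h) \<and>
     (\<forall>v. syzA n I r s g v \<longrightarrow> rspanA n I s H v) \<and>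
     (\<forall>h\<in>H. \<not> rspanA n I s {w\<in>H. \<not> vequivA I s w h} h)"

type_synonym 'k cpoly = "((nat \<times> nat) \<Rightarrow>\<^sub>0 nat) \<Rightarrow>\<^sub>0 'k"

definition X :: "nat \<Rightarrow> nat \<Rightarrow> 'k::{zero,one} cpoly" where
  "X i j = Poly_Mapping.single (Poly_Mapping.single (i, j) 1) 1"

definition cconst :: "'k::zero \<Rightarrow> 'k cpoly" where
  "cconst c = Poly_Mapping.single 0 c"

definition Pcar :: "nat \<Rightarrow> 'k::zero cpoly set" where
  "Pcar n = {p. \<forall>m\<in>Poly_Mapping.keys p. \<forall>(i,j)\<in>Poly_Mapping.keys m. 1 \<le> i \<and> i \<le> n \<and> 1 \<le> j}"

definition Pdcar :: "nat \<Rightarrow> nat \<Rightarrow> 'k::zero cpoly set" where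
  "Pdcar n d = {p. \<forall>m\<in>Poly_Mapping.keys p. \<forall>(i,j)\<in>Poly_Mapping.keys m. 1 \<le> i \<and> i \<le> n \<and> 1 \<le> j \<and> j \<le> d}"

definition cdeg :: "((nat \<times> nat) \<Rightarrow>\<^sub>0 nat) \<Rightarrow> nat" where
  "cdeg m = (\<Sum>x\<in>Poly_Mapping.keys m. Poly_Mapping.lookup m x)"

definition phom :: "nat \<Rightarrow> 'k::zero cpoly \<Rightarrow> bool" where
  "phom e p \<longleftrightarrow> (\<forall>m\<in>Poly_Mapping.keys p. cdeg m = e)"

text \<open>sigma^k(iota(w)) for a word w: x_{w_1,1+k} ... x_{w_e,e+k}.\<close>
definition lpw :: "nat \<Rightarrow> nat list \<Rightarrow> 'k::comm_ring_1 cpoly" where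
  "lpw k w = (\<Prod>t<length w. X (w ! t) (t + 1 + k))"

text \<open>sigma^k o iota, the K-linear extension to F.\<close>
definition iota_sh :: "nat \<Rightarrow> 'k::comm_ring_1 fpoly \<Rightarrow> 'k cpoly" where
  "iota_sh k p = (\<Sum>w\<in>Poly_Mapping.keys p. cconst (Poly_Mapping.lookup p w) * lpw k w)"

text \<open>Generators of Q + J' in P, where J' is generated by the sigma^k(iota(I)).
S = R/J = P/(ideal generated by these).\<close>
definition LPgens :: "nat \<Rightarrow> 'k::comm_ring_1 fpoly set \<Rightarrow> 'k cpoly set" where
  "LPgens n I = {X i j * X k j | i k j. 1 \<le> i \<and> i \<le> n \<and> 1 \<le> k \<and> k \<le> n \<and> 1 \<le> j}
              \<union> {iota_sh k p | k p. p \<in> I}"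

definition LPideal :: "nat \<Rightarrow> 'k::comm_ring_1 fpoly set \<Rightarrow> 'k cpoly set" where
  "LPideal n I = {\<Sum>t<length as. as ! t * gs ! t | as gs.
       length as = length gs \<and> set as \<subseteq> Pcar n \<and> set gs \<subseteq> LPgens n I}"

definition vequivS :: "nat \<Rightarrow> 'k::comm_ring_1 fpoly set \<Rightarrow> nat \<Rightarrow> (nat \<Rightarrow> 'k cpoly) \<Rightarrow> (nat \<Rightarrow> 'k cpoly) \<Rightarrow> bool" where
  "vequivS n I m v w \<longleftrightarrow> (\<forall>i\<in>{1..m}. v i - w i \<in> LPideal n I)"

definition spanSd :: "nat \<Rightarrow> 'k::comm_ring_1 fpoly set \<Rightarrow> nat \<Rightarrow> nat \<Rightarrow> (nat \<Rightarrow> 'k cpoly) set \<Rightarrow> (nat \<Rightarrow> 'k cpoly) \<Rightarrow> bool" where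
  "spanSd n I d m G v \<longleftrightarrow> (\<exists>gs as. length as = length gs \<and> set gs \<subseteq> G \<and> set as \<subseteq> Pdcar n d \<and>
      vequivS n I m v (\<lambda>i. \<Sum>t<length gs. ((gs ! t) i) * (as ! t)))"

definition homS :: "nat \<Rightarrow> 'k::comm_ring_1 fpoly set \<Rightarrow> nat \<Rightarrow> (nat \<Rightarrow> nat) \<Rightarrow> nat \<Rightarrow> (nat \<Rightarrow> 'k cpoly) \<Rightarrow> bool" where
  "homS n I s \<Delta> e v \<longleftrightarrow> (\<exists>w. vequivS n I s v w \<and>
     (\<forall>j\<in>{1..s}. if \<Delta> j \<le> e then phom (e - \<Delta> j) (w j) else w j = 0))"

text \<open>K'_{|d}: elements sum_j eps'_j f'_j with f'_j in S(d) and sum_j g'_j f'_j = 0,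
where g'_j = iota(g_j).\<close>
definition syzSd :: "nat \<Rightarrow> 'k::comm_ring_1 fpoly set \<Rightarrow> nat \<Rightarrow> nat \<Rightarrow> nat \<Rightarrow> (nat \<Rightarrow> nat \<Rightarrow> 'k fpoly)
     \<Rightarrow> (nat \<Rightarrow> 'k cpoly) \<Rightarrow> bool" where
  "syzSd n I d r s g v \<longleftrightarrow> (\<exists>w. vequivS n I s v w \<and> (\<forall>j\<in>{1..s}. w j \<in> Pdcar n d) \<and>
     (\<forall>i\<in>{1..r}. (\<Sum>j=1..s. iota_sh 0 (g j i) * w j) \<in> LPideal n I))"

definition minbasis_syzSd :: "nat \<Rightarrow> 'k::comm_ring_1 fpoly set \<Rightarrow> nat \<Rightarrow> nat \<Rightarrow> nat \<Rightarrow> (nat \<Rightarrow> nat)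
     \<Rightarrow> (nat \<Rightarrow> nat \<Rightarrow> 'k fpoly) \<Rightarrow> (nat \<Rightarrow> 'k cpoly) set \<Rightarrow> bool" where
  "minbasis_syzSd n I d r s \<Delta> g H \<longleftrightarrow>
     (\<forall>h\<in>H. syzSd n I d r s g h) \<and>
     (\<forall>h\<in>H. \<exists>e. homS n I s \<Delta> e h) \<and>
     (\<forall>v. syzSd n I d r s g v \<longrightarrow> spanSd n I d s H v) \<and>
     (\<forall>h\<in>H. \<not> spanSd n I d s {w\<in>H. \<not> vequivS n I s w h} h)"

definition Bset :: "nat \<Rightarrow> nat \<Rightarrow> (nat \<Rightarrow> nat) \<Rightarrow> (nat \<Rightarrow> 'k::comm_ring_1 cpoly) set" where
  "Bset n s \<Delta> = {(\<lambda>j'. if j' = j then X k l else 0) | j k l.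
        1 \<le> j \<and> j \<le> s \<and> 1 \<le> k \<and> k \<le> n \<and> 1 \<le> l \<and> l \<le> \<Delta> j}"

end

theory Submission
  imports Defs
begin


abbreviation LK where "LK \<equiv> Poly_Mapping.lookup"
abbreviation KS where "KS \<equiv> Poly_Mapping.keys"
abbreviation SG where "SG \<equiv> Poly_Mapping.single"

instantiation list :: (type) monoid_add
begin
definition zero_list_def: "0 = []"
definition plus_list_def: "xs + ys = xs @ ys"
instance by standard (auto simp: zero_list_def plus_list_def)
end

lemma pm_expand: "p = (\<Sum>k\<in>KS p. SG k (LK p k))"
  by (rule poly_mapping_eqI) (auto simp add: lookup_sum lookup_single when_def in_keys_iff)

lemma pm_induct_keys:
  fixes p :: "'a \<Rightarrow>\<^sub>0 'b::comm_monoid_add"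
  assumes "P 0" "\<And>k c. k \<in> KS p \<Longrightarrow> P (SG k c)" "\<And>a b. P a \<Longrightarrow> P b \<Longrightarrow> P (a + b)"
  shows "P p"
proof -
  have "finite A \<Longrightarrow> A \<subseteq> KS p \<Longrightarrow> P (\<Sum>k\<in>A. SG k (LK p k))" for A
    by (induction rule: finite_induct) (auto intro: assms)
  from this[of "KS p"] show ?thesis by (simp flip: pm_expand)
qed

lemma pm_induct:
  fixes p :: "'a \<Rightarrow>\<^sub>0 'b::comm_monoid_add"
  assumes "P 0" "\<And>k c. P (SG k c)" "\<And>a b. P a \<Longrightarrow> P b \<Longrightarrow> P (a + b)"
  shows "P p"
  using pm_induct_keys[of P p] assms by blast

lemma fmul_eq: "fmul p q = p * q"
proof -
  have "p * q = (\<Sum>u\<in>KS p. SG u (LK p u)) * (\<Sum>v\<in>KS q. SG v (LK q v))"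
    by (simp flip: pm_expand)
  also have "\<dots> = (\<Sum>u\<in>KS p. \<Sum>v\<in>KS q. SG u (LK p u) * SG v (LK q v))"
    by (subst sum_distrib_right) (simp only: sum_distrib_left)
  also have "\<dots> = fmul p q"
    by (simp add: fmul_def mult_single plus_list_def)
  finally show ?thesis by simp
qed

lemma single_mult_list: "SG u a * SG v b = SG (u @ v) (a * b)"
  by (simp add: mult_single plus_list_def)

lemma lookup_fcomp: "LK (fcomp e p) u = (if length u = e then LK p u else 0)"
  unfolding fcomp_def
  by (auto simp add: lookup_sum lookup_single when_def in_keys_iff)

lemma fcomp_add: "fcomp e (p + q) = fcomp e p + fcomp e q"
  by (rule poly_mapping_eqI) (simp add: lookup_fcomp lookup_add)
lemma fcomp_uminus: "fcomp e (- p) = - fcomp e p"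
  by (rule poly_mapping_eqI) (simp add: lookup_fcomp)
lemma fcomp_diff: "fcomp e (p - q) = fcomp e p - fcomp e q"
  by (rule poly_mapping_eqI) (simp add: lookup_fcomp lookup_minus)
lemma fcomp_zero[simp]: "fcomp e 0 = 0"
  by (rule poly_mapping_eqI) (simp add: lookup_fcomp)
lemma fcomp_sum: "fcomp e (sum f A) = (\<Sum>x\<in>A. fcomp e (f x))"
  by (rule poly_mapping_eqI) (simp add: lookup_fcomp lookup_sum)
lemma fcomp_fcomp: "fcomp e (fcomp e' p) = (if e = e' then fcomp e p else 0)"
  by (rule poly_mapping_eqI) (simp add: lookup_fcomp)
lemma fcomp_single: "fcomp e (SG w c) = (if length w = e then SG w c else 0)"
  by (rule poly_mapping_eqI) (simp add: lookup_fcomp lookup_single when_def)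

lemma fhom_iff: "fhom e p \<longleftrightarrow> fcomp e p = p"
  unfolding fhom_def poly_mapping_eq_iff
  by (auto simp: fun_eq_iff lookup_fcomp in_keys_iff)

lemma fhom_fcomp: "fhom e (fcomp e p)"
  by (simp add: fhom_iff fcomp_fcomp)

lemma fcomp_decomp:
  assumes "\<forall>w\<in>KS p. length w < N"
  shows "(\<Sum>e<N. fcomp e p) = p"
proof (rule poly_mapping_eqI)
  fix u
  show "LK (\<Sum>e<N. fcomp e p) u = LK p u"
  proof (cases "length u < N")
    case True
    then show ?thesis by (simp add: lookup_sum lookup_fcomp)
  next
    case False
    then have "LK p u = 0" using assms by (auto simp: in_keys_iff)
    then show ?thesis by (simp add: lookup_sum lookup_fcomp)
  qed
qed

lemma fcomp_decomp_ex: "\<exists>N. \<forall>M\<ge>N. (\<Sum>e<M. fcomp e p) = p"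
proof -
  obtain N where "\<forall>w\<in>KS p. length w < N"
    using finite_keys[of p] by (metis finite_maxlen)
  then show ?thesis by (metis fcomp_decomp order_less_le_trans)
qed

lemma fcomp_mult_hom:
  assumes "fhom a p"
  shows "fcomp (a + b) (p * c) = p * fcomp b c"
proof -
  have H: "\<forall>w\<in>KS p. length w = a" using assms by (simp add: fhom_def)
  show ?thesis
  proof (rule pm_induct_keys[of "\<lambda>q. fcomp (a + b) (q * c) = q * fcomp b c" p])
    fix k x assume k: "k \<in> KS p"
    show "fcomp (a + b) (SG k x * c) = SG k x * fcomp b c"
      by (induction c rule: pm_induct)
        (use H k in \<open>auto simp: single_mult_list fcomp_single fcomp_add distrib_left\<close>)
  qed (auto simp: distrib_right fcomp_add)
qed

lemma fcomp_mult_hom0: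
  assumes "fhom a p" "e < a"
  shows "fcomp e (p * c) = 0"
proof -
  have H: "\<forall>w\<in>KS p. length w = a" using assms by (simp add: fhom_def)
  show ?thesis
  proof (rule pm_induct_keys[of "\<lambda>q. fcomp e (q * c) = 0" p])
    fix k x assume k: "k \<in> KS p"
    show "fcomp e (SG k x * c) = 0"
      by (induction c rule: pm_induct)
        (use H k assms(2) in \<open>auto simp: single_mult_list fcomp_single fcomp_add distrib_left\<close>)
  qed (auto simp: distrib_right fcomp_add)
qed


lemma Fcar_iff: "p \<in> Fcar n \<longleftrightarrow> (\<forall>w\<in>KS p. set w \<subseteq> {1..n})"
  by (simp add: Fcar_def)

lemma Fcar_zero[simp]: "0 \<in> Fcar n"
  by (simp add: Fcar_def)

lemma Fcar_add: "p \<in> Fcar n \<Longrightarrow> q \<in> Fcar n \<Longrightarrow> p + q \<in> Fcar n"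
  using keys_add[of p q] by (auto simp: Fcar_def)

lemma Fcar_uminus: "p \<in> Fcar n \<Longrightarrow> - p \<in> Fcar n"
  by (simp add: Fcar_def)

lemma Fcar_diff: "(p::'k::ab_group_add fpoly) \<in> Fcar n \<Longrightarrow> q \<in> Fcar n \<Longrightarrow> p - q \<in> Fcar n"
  using Fcar_add[OF _ Fcar_uminus, of p n q] by (simp only: diff_conv_add_uminus)

lemma Fcar_mult: "p \<in> Fcar n \<Longrightarrow> q \<in> Fcar n \<Longrightarrow> (p::'k::ring fpoly) * q \<in> Fcar n"
  using keys_mult[of p q] by (fastforce simp: Fcar_def plus_list_def)

lemma Fcar_fcomp: "p \<in> Fcar n \<Longrightarrow> fcomp e p \<in> Fcar n"
  by (auto simp: Fcar_def in_keys_iff lookup_fcomp split: if_splits)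

lemma Fcar_single: "set w \<subseteq> {1..n} \<Longrightarrow> SG w c \<in> Fcar n"
  by (simp add: Fcar_def)

lemma Fcar_sum: "(\<And>x. x \<in> A \<Longrightarrow> f x \<in> Fcar n) \<Longrightarrow> sum f A \<in> Fcar n"
  by (induction A rule: infinite_finite_induct) (auto intro: Fcar_add)

lemma single_nil_mult: "SG [] c * p = Poly_Mapping.map ((*) c) (p::'k::ring fpoly)"
  by (simp add: mult_map_scale_conv_mult zero_list_def)

lemma neg_eq_single_mult: "- (p::'k::ring_1 fpoly) = SG [] (-1) * p"
  by (induction p rule: pm_induct) (auto simp: single_mult_list distrib_left single_uminus)

context
  fixes n :: nat and I :: "'k::ring_1 fpoly set"
  assumes I: "graded_ideal n I"
begin

lemma I_Fcar: "p \<in> I \<Longrightarrow> p \<in> Fcar n"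
  using I by (auto simp: graded_ideal_def)
lemma I_zero[simp]: "0 \<in> I"
  using I by (auto simp: graded_ideal_def)
lemma I_add: "p \<in> I \<Longrightarrow> q \<in> I \<Longrightarrow> p + q \<in> I"
  using I by (auto simp: graded_ideal_def)
lemma I_lmult: "a \<in> Fcar n \<Longrightarrow> p \<in> I \<Longrightarrow> a * p \<in> I"
  using I by (auto simp: graded_ideal_def fmul_eq)
lemma I_rmult: "a \<in> Fcar n \<Longrightarrow> p \<in> I \<Longrightarrow> p * a \<in> I"
  using I by (auto simp: graded_ideal_def fmul_eq)
lemma I_fcomp: "p \<in> I \<Longrightarrow> fcomp e p \<in> I"
  using I by (auto simp: graded_ideal_def)
lemma I_uminus: "p \<in> I \<Longrightarrow> - p \<in> I"
  by (simp add: neg_eq_single_mult I_lmult Fcar_single)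
lemma I_diff: "p \<in> I \<Longrightarrow> q \<in> I \<Longrightarrow> p - q \<in> I"
  using I_add[of p "-q"] I_uminus[of q] by simp
lemma I_sum: "(\<And>x. x \<in> A \<Longrightarrow> f x \<in> I) \<Longrightarrow> sum f A \<in> I"
  by (induction A rule: infinite_finite_induct) (auto intro: I_add)
lemma I_diff_cancel: "p - q \<in> I \<Longrightarrow> q - r \<in> I \<Longrightarrow> p - r \<in> I"
  using I_add[of "p - q" "q - r"] by simp
lemma I_sym: "p - q \<in> I \<Longrightarrow> q - p \<in> I"
  using I_uminus[of "p - q"] by simp
end

definition lpmon :: "nat \<Rightarrow> nat list \<Rightarrow> (nat \<times> nat) \<Rightarrow>\<^sub>0 nat" where
  "lpmon k w = (\<Sum>t<length w. SG (w ! t, t + 1 + k) 1)"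

lemma lookup_lpmon:
  "LK (lpmon k w) (a, c) = (if k < c \<and> c \<le> k + length w \<and> w ! (c - k - 1) = a then 1 else 0)"
proof -
  have "LK (lpmon k w) (a, c) = (\<Sum>t\<in>{..<length w}. if t = c - k - 1 then (if k < c \<and> w ! (c - k - 1) = a then 1 else 0) else 0)"
    unfolding lpmon_def lookup_sum
  proof (rule sum.cong)
    fix t assume "t \<in> {..<length w}"
    have e: "t + 1 + k = c \<longleftrightarrow> (t = c - k - 1 \<and> k < c)" by linarith
    show "LK (SG (w ! t, t + 1 + k) 1) (a, c) = (if t = c - k - 1 then (if k < c \<and> w ! (c - k - 1) = a then 1 else 0) else 0)"
      unfolding lookup_single when_def by (cases "t = c - k - 1") (auto simp: e)
  qed simp
  also have "\<dots> = (if c - k - 1 < length w then (if k < c \<and> w ! (c - k - 1) = a then 1 else 0) else 0)"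
    by (simp only: sum.delta[OF finite_lessThan] lessThan_iff)
  also have "\<dots> = (if k < c \<and> c \<le> k + length w \<and> w ! (c - k - 1) = a then 1 else 0)"
  proof (cases "k < c")
    case True
    then have "c - k - 1 < length w \<longleftrightarrow> c \<le> k + length w" by linarith
    then show ?thesis using True by simp
  qed simp
  finally show ?thesis .
qed

lemma lookup_lpmon': "LK (lpmon k w) x = (if k < snd x \<and> snd x \<le> k + length w \<and> w ! (snd x - k - 1) = fst x then 1 else 0)"
  by (cases x) (simp only: lookup_lpmon fst_conv snd_conv)

lemma lpmon_nil[simp]: "lpmon k [] = 0"
  by (simp add: lpmon_def)

lemma lpmon_append: "lpmon k (u @ v) = lpmon k u + lpmon (k + length u) v"
proof (rule poly_mapping_eqI)
  fix x :: "nat \<times> nat"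
  obtain a c where x: "x = (a, c)" by force
  show "LK (lpmon k (u @ v)) x = LK (lpmon k u + lpmon (k + length u) v) x"
  proof (cases "c \<le> k + length u")
    case True
    have 1: "LK (lpmon (k + length u) v) (a, c) = 0" using True by (simp add: lookup_lpmon)
    have 2: "LK (lpmon k (u @ v)) (a, c) = LK (lpmon k u) (a, c)"
    proof (cases "k < c")
      case True
      with \<open>c \<le> k + length u\<close> have "c - k - 1 < length u" by linarith
      then have "(u @ v) ! (c - k - 1) = u ! (c - k - 1)" by (simp add: nth_append)
      then show ?thesis using True \<open>c \<le> k + length u\<close> by (simp add: lookup_lpmon)
    next
      case False
      then show ?thesis by (simp add: lookup_lpmon)
    qed
    show ?thesis unfolding x lookup_add 1 2 by simp
  next
    case False
    have 1: "LK (lpmon k u) (a, c) = 0" using False by (simp add: lookup_lpmon)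
    have e: "c - k - 1 - length u = c - (k + length u) - 1" by linarith
    have "\<not> c - k - 1 < length u" using False by linarith
    then have 3: "(u @ v) ! (c - k - 1) = v ! (c - (k + length u) - 1)" by (simp add: nth_append e)
    have 2: "LK (lpmon k (u @ v)) (a, c) = LK (lpmon (k + length u) v) (a, c)"
      unfolding lookup_lpmon 3 using False by simp
    show ?thesis unfolding x lookup_add 1 2 by simp
  qed
qed

lemma lpmon_single: "lpmon k [a] = SG (a, k + 1) 1"
  by (simp add: lpmon_def)

lemma lpmon_inj: assumes "lpmon k u = lpmon k v" shows "u = v"
proof -
  have L: "LK (lpmon k u) x = LK (lpmon k v) x" for x using assms by simp
  have len: "length u = length v"
  proof (rule ccontr)
    assume "length u \<noteq> length v"
    then consider "length u < length v" | "length v < length u" by linarith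
    then show False
    proof cases
      case 1
      then have "v \<noteq> []" by auto
      then show False using 1 L[of "(v ! (length v - 1), k + length v)"]
        by (simp add: lookup_lpmon)
    next
      case 2
      then have "u \<noteq> []" by auto
      then show False using 2 L[of "(u ! (length u - 1), k + length u)"]
        by (simp add: lookup_lpmon)
    qed
  qed
  show ?thesis
  proof (rule nth_equalityI[OF len])
    fix t assume "t < length u"
    then show "u ! t = v ! t" using L[of "(u ! t, k + t + 1)"] len
      by (simp add: lookup_lpmon split: if_splits)
  qed
qed

lemma lpmon_inj': "lpmon k u = lpmon k v \<longleftrightarrow> u = v"
  using lpmon_inj by blast

lemma cdeg_add: "cdeg (m + m') = cdeg m + cdeg m'"
  unfolding cdeg_def by (rule setsum_keys_plus_distrib) auto

lemma cdeg_single: "cdeg (SG x 1) = 1" "cdeg (SG x (Suc 0)) = 1"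
  by (simp_all add: cdeg_def)

lemma cdeg_zero[simp]: "cdeg 0 = 0"
  by (simp add: cdeg_def)

lemma cdeg_lpmon: "cdeg (lpmon k u) = length u"
  by (induction u rule: rev_induct) (simp_all add: lpmon_append lpmon_single cdeg_add cdeg_single)

lemma prod_single_one: "(\<Prod>t\<in>A. SG (f t) (1::'k::comm_ring_1)) = SG (\<Sum>t\<in>A. f t) 1"
  by (induction A rule: infinite_finite_induct) (auto simp: mult_single)

lemma lpw_eq: "lpw k w = (SG (lpmon k w) 1 :: 'k::comm_ring_1 cpoly)"
  unfolding lpw_def X_def lpmon_def by (simp add: prod_single_one)

lemma cconst_mult: "cconst c * SG m 1 = (SG m c :: 'k::comm_ring_1 cpoly)"
  by (simp add: cconst_def mult_single)

lemma iota_alt: "iota_sh k p = (\<Sum>w\<in>KS p. SG (lpmon k w) (LK p w))"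
  unfolding iota_sh_def by (simp add: lpw_eq cconst_mult)

lemma iota_single: "iota_sh k (SG w c) = SG (lpmon k w) c"
  by (simp add: iota_alt)

lemma iota_add: "iota_sh k (p + q) = iota_sh k p + iota_sh k q"
  unfolding iota_alt by (rule setsum_keys_plus_distrib) (auto simp: single_add)

lemma iota_zero[simp]: "iota_sh k 0 = 0"
  by (simp add: iota_alt)

lemma iota_uminus: "iota_sh k (- p) = - iota_sh k p"
  unfolding iota_alt by (simp add: single_uminus sum_negf)

lemma iota_diff: "iota_sh k (p - q) = iota_sh k p - iota_sh k q"
  using iota_add[of k p "-q"] iota_uminus[of k q] by simp

lemma iota_sum: "iota_sh k (sum f A) = (\<Sum>x\<in>A. iota_sh k (f x))"
  by (induction A rule: infinite_finite_induct) (auto simp: iota_add)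

lemma iota_mult:
  assumes "fhom a f"
  shows "iota_sh k (f * q) = iota_sh k f * iota_sh (k + a) (q :: 'k::comm_ring_1 fpoly)"
proof -
  have H: "\<forall>w\<in>KS f. length w = a" using assms by (simp add: fhom_def)
  show ?thesis
  proof (rule pm_induct_keys[of "\<lambda>f. iota_sh k (f * q) = iota_sh k f * iota_sh (k + a) q" f])
    fix w x assume w: "w \<in> KS f"
    then have lw: "length w = a" using H by auto
    show "iota_sh k (SG w x * q) = iota_sh k (SG w x) * iota_sh (k + a) q"
    proof (induction q rule: pm_induct)
      case (2 v y)
      have "iota_sh k (SG w x * SG v y) = SG (lpmon k w + lpmon (k + a) v) (x * y)"
        by (simp add: single_mult_list iota_single lpmon_append lw)
      also have "\<dots> = iota_sh k (SG w x) * iota_sh (k + a) (SG v y)"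
        by (simp add: iota_single mult_single)
      finally show ?case .
    next
      case (3 p q)
      then show ?case by (simp add: distrib_left iota_add)
    qed simp
  qed (auto simp: distrib_right iota_add)
qed


lemma keys_add_nat: "KS (a + b :: 'a \<Rightarrow>\<^sub>0 nat) = KS a \<union> KS b"
  by (auto simp: in_keys_iff lookup_add)

lemma keys_lpmon: "KS (lpmon k u) = {(u ! t, k + t + 1) | t. t < length u}"
proof -
  have "x \<in> KS (lpmon k u) \<longleftrightarrow> x \<in> {(u ! t, k + t + 1) | t. t < length u}" for x
  proof -
    obtain a c where x: "x = (a, c)" by force
    have "k < c \<and> c \<le> k + length u \<and> u ! (c - k - 1) = a \<longleftrightarrow> (\<exists>t. (a, c) = (u ! t, k + t + 1) \<and> t < length u)"
    proof
      assume H: "k < c \<and> c \<le> k + length u \<and> u ! (c - k - 1) = a"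
      then have "c = k + (c - k - 1) + 1" "c - k - 1 < length u" by linarith+
      then show "\<exists>t. (a, c) = (u ! t, k + t + 1) \<and> t < length u" using H by metis
    next
      assume "\<exists>t. (a, c) = (u ! t, k + t + 1) \<and> t < length u"
      then obtain t where "a = u ! t" "c = k + t + 1" "t < length u" by auto
      moreover have "c - k - 1 = t" using \<open>c = k + t + 1\<close> by linarith
      ultimately show "k < c \<and> c \<le> k + length u \<and> u ! (c - k - 1) = a" by simp
    qed
    then show ?thesis unfolding x in_keys_iff lookup_lpmon by auto
  qed
  then show ?thesis by blast
qed

definition mlet :: "nat \<Rightarrow> ((nat \<times> nat) \<Rightarrow>\<^sub>0 nat) \<Rightarrow> bool" where
  "mlet n m \<longleftrightarrow> (\<forall>x\<in>KS m. 1 \<le> fst x \<and> fst x \<le> n)"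

lemma mlet_add: "mlet n (a + b) \<longleftrightarrow> mlet n a \<and> mlet n b"
  by (auto simp: mlet_def keys_add_nat)

lemma mlet_lpmon: "mlet n (lpmon k u) \<longleftrightarrow> set u \<subseteq> {1..n}"
proof -
  have "mlet n (lpmon k u) \<longleftrightarrow> (\<forall>t<length u. 1 \<le> u ! t \<and> u ! t \<le> n)"
    unfolding mlet_def keys_lpmon by auto
  also have "\<dots> \<longleftrightarrow> set u \<subseteq> {1..n}"
    by (auto simp: subset_iff in_set_conv_nth)
  finally show ?thesis .
qed

lemma lookup_lpmon_le1: "LK (lpmon k u) x \<le> 1"
  by (simp add: lookup_lpmon')

lemma lpmon_mid:
  assumes H: "lpmon k u = m + lpmon k' w" and w: "w \<noteq> []"
  shows "\<exists>u1 u2. u = u1 @ w @ u2 \<and> k' = k + length u1 \<and> m = lpmon k u1 + lpmon (k' + length w) u2"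
proof -
  have L: "k < k' + t + 1 \<and> k' + t + 1 \<le> k + length u \<and> u ! (k' + t - k) = w ! t" if t: "t < length w" for t
  proof -
    have "LK (lpmon k' w) (w ! t, k' + t + 1) = 1" using t by (simp add: lookup_lpmon)
    then have "LK (lpmon k u) (w ! t, k' + t + 1) \<noteq> 0" using H by (simp add: lookup_add)
    moreover have "k' + t + 1 - k - 1 = k' + t - k" by simp
    ultimately show ?thesis unfolding lookup_lpmon by (auto split: if_splits)
  qed
  have kk: "k \<le> k'" using L[of 0] w by simp
  have "k' + (length w - 1) + 1 \<le> k + length u" using L[of "length w - 1"] w by simp
  moreover have "0 < length w" using w by simp
  ultimately have kl: "k' + length w \<le> k + length u" by linarith
  define u1 where "u1 = take (k' - k) u"
  define u2 where "u2 = drop (k' - k + length w) u"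
  define mid where "mid = take (length w) (drop (k' - k) u)"
  have lu1: "length u1 = k' - k" using kk kl by (simp add: u1_def)
  have "mid = w"
  proof (rule nth_equalityI)
    show "length mid = length w" using kk kl by (simp add: mid_def)
    fix t assume "t < length mid"
    then have t: "t < length w" using kk kl by (simp add: mid_def)
    have "mid ! t = u ! (k' - k + t)" using t kk kl by (simp add: mid_def)
    also have "k' - k + t = k' + t - k" using kk by simp
    finally show "mid ! t = w ! t" using L[OF t] by simp
  qed
  have u: "u = u1 @ w @ u2"
  proof -
    have "u = take (k' - k) u @ drop (k' - k) u" by simp
    also have "drop (k' - k) u = mid @ u2"
      unfolding mid_def u2_def by (metis append_take_drop_id drop_drop add.commute)
    finally show ?thesis using \<open>mid = w\<close> u1_def by simp
  qed
  have k': "k' = k + length u1" using lu1 kk by simp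
  have "lpmon k u = lpmon k u1 + lpmon k' w + lpmon (k' + length w) u2"
    unfolding u by (simp add: lpmon_append k' add.assoc)
  then have "m + lpmon k' w = (lpmon k u1 + lpmon (k' + length w) u2) + lpmon k' w"
    using H by (simp add: ac_simps)
  then have "m = lpmon k u1 + lpmon (k' + length w) u2" by simp
  with u k' show ?thesis by blast
qed

lemma lpmon_split:
  assumes H: "lpmon k u = lpmon k w + m"
  shows "\<exists>v. u = w @ v \<and> m = lpmon (k + length w) v"
proof (cases "w = []")
  case True
  then show ?thesis using H by simp
next
  case False
  from lpmon_mid[of k u m k w] H False obtain u1 u2 where
    "u = u1 @ w @ u2" "k = k + length u1" "m = lpmon k u1 + lpmon (k + length w) u2"
    by (auto simp: ac_simps)
  then show ?thesis by auto
qed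

definition phi :: "nat \<Rightarrow> nat \<Rightarrow> 'k::zero cpoly \<Rightarrow> 'k fpoly" where
  "phi k e P = Abs_poly_mapping (\<lambda>u. if length u = e then LK P (lpmon k u) else 0)"

lemma inj_lpmon: "inj (lpmon k)"
  by (rule injI) (rule lpmon_inj)

lemma lookup_phi: "LK (phi k e P) u = (if length u = e then LK P (lpmon k u) else 0)"
proof -
  have "{u. (if length u = e then LK P (lpmon k u) else 0) \<noteq> 0} \<subseteq> lpmon k -` KS P"
    by (auto simp: in_keys_iff split: if_splits)
  moreover have "finite (lpmon k -` KS P)"
    by (rule finite_vimageI) (auto simp: inj_lpmon)
  ultimately have "finite {u. (if length u = e then LK P (lpmon k u) else 0) \<noteq> 0}"
    by (rule finite_subset)
  then show ?thesis unfolding phi_def by simp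
qed

lemma phi_add: "phi k e (P + Q) = phi k e P + phi k e Q"
  by (rule poly_mapping_eqI) (simp add: lookup_phi lookup_add)
lemma phi_zero[simp]: "phi k e 0 = 0"
  by (rule poly_mapping_eqI) (simp add: lookup_phi)
lemma phi_uminus: "phi k e (- P) = - phi k e P"
  by (rule poly_mapping_eqI) (simp add: lookup_phi)
lemma phi_diff: "phi k e (P - Q) = phi k e P - phi k e Q"
  by (rule poly_mapping_eqI) (simp add: lookup_phi lookup_minus)
lemma phi_sum: "phi k e (sum f A) = (\<Sum>x\<in>A. phi k e (f x))"
  by (rule poly_mapping_eqI) (simp add: lookup_phi lookup_sum)

lemma phi_single_lpmon: "phi k e (SG (lpmon k u) c) = (if length u = e then SG u c else 0)"
  by (rule poly_mapping_eqI) (auto simp: lookup_phi lookup_single when_def lpmon_inj')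

lemma phi_single_none: "(\<And>u::nat list. length u = e \<Longrightarrow> lpmon k u \<noteq> m) \<Longrightarrow> phi k e (SG m c) = 0"
  by (rule poly_mapping_eqI) (auto simp: lookup_phi lookup_single when_def)

lemma phi_iota: "phi k e (iota_sh k f) = fcomp e f"
  by (induction f rule: pm_induct)
    (auto simp: iota_single phi_single_lpmon fcomp_single iota_add phi_add fcomp_add)

lemma phi_hom_zero: assumes "phom l P" "l \<noteq> e" shows "phi k e P = 0"
proof (rule poly_mapping_eqI)
  fix u :: "nat list"
  have "length u = e \<Longrightarrow> lpmon k u \<notin> KS P"
    using assms cdeg_lpmon[of k u] unfolding phom_def by auto
  then show "LK (phi k e P) u = LK 0 u" by (auto simp: lookup_phi in_keys_iff)
qed

lemma phi_Pdcar_zero: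
  assumes "P \<in> Pdcar n d" "d < k + e" "0 < e"
  shows "phi k e P = 0"
proof (rule poly_mapping_eqI)
  fix u :: "nat list"
  show "LK (phi k e P) u = LK 0 u"
  proof (cases "length u = e")
    case True
    have "(u ! (e - 1), k + (e - 1) + 1) \<in> KS (lpmon k u)"
      unfolding keys_lpmon using True assms(3) by auto
    moreover have "k + (e - 1) + 1 = k + e" using assms(3) by simp
    ultimately have "lpmon k u \<notin> KS P" using assms(1,2) unfolding Pdcar_def by fastforce
    then show ?thesis by (simp add: lookup_phi in_keys_iff)
  qed (simp add: lookup_phi)
qed

lemma phi_prod:
  assumes "fhom l f"
  shows "phi k e (iota_sh k f * a) = (if l \<le> e then f * phi (k + l) (e - l) a else 0)"
proof -
  have H: "\<forall>w\<in>KS f. length w = l" using assms by (simp add: fhom_def)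
  show ?thesis
  proof (rule pm_induct_keys[of "\<lambda>f. phi k e (iota_sh k f * a) = (if l \<le> e then f * phi (k + l) (e - l) a else 0)" f])
    fix w x assume w: "w \<in> KS f"
    then have lw: "length w = l" using H by auto
    show "phi k e (iota_sh k (SG w x) * a) = (if l \<le> e then SG w x * phi (k + l) (e - l) a else 0)"
    proof (induction a rule: pm_induct)
      case (2 m y)
      have lhs: "iota_sh k (SG w x) * SG m y = SG (lpmon k w + m) (x * y)"
        by (simp add: iota_single mult_single)
      show ?case
      proof (cases "l \<le> e \<and> (\<exists>v. length v = e - l \<and> lpmon (k + l) v = m)")
        case True
        then obtain v where v: "length v = e - l" "lpmon (k + l) v = m" "l \<le> e" by auto
        have "phi k e (SG (lpmon k w + m) (x * y)) = SG (w @ v) (x * y)"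
          using phi_single_lpmon[of k e "w @ v" "x * y"] v lw by (simp add: lpmon_append)
        moreover have "phi (k + l) (e - l) (SG m y) = SG v y"
          using phi_single_lpmon[of "k + l" "e - l" v y] v by simp
        ultimately show ?thesis using lhs v by (simp add: single_mult_list)
      next
        case False
        have "phi k e (SG (lpmon k w + m) (x * y)) = 0"
        proof (rule phi_single_none)
          fix u :: "nat list" assume lu: "length u = e"
          show "lpmon k u \<noteq> lpmon k w + m"
          proof
            assume "lpmon k u = lpmon k w + m"
            from lpmon_split[OF this] obtain v where "u = w @ v" "m = lpmon (k + length w) v" by blast
            then show False using False lu lw by auto
          qed
        qed
        moreover have "l \<le> e \<Longrightarrow> phi (k + l) (e - l) (SG m y) = 0"
          using False by (intro phi_single_none) auto
        ultimately show ?thesis using lhs by auto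
      qed
    next
      case (3 p q)
      then show ?case by (simp add: distrib_left phi_add)
    qed simp
  qed (auto simp: distrib_right iota_add phi_add)
qed

lemma phi_Xmult:
  assumes "l \<le> k"
  shows "phi k e (X i l * (a::'k::comm_ring_1 cpoly)) = 0"
proof (induction a rule: pm_induct)
  case (2 m y)
  have "X i l * SG m y = SG (SG (i, l) 1 + m) y" by (simp add: X_def mult_single)
  moreover have "phi k e (SG (SG (i, l) 1 + m) y) = 0"
  proof (rule phi_single_none)
    fix u :: "nat list" assume "length u = e"
    have "LK (SG (i, l) 1 + m) (i, l) \<noteq> 0" by (simp add: lookup_add)
    moreover have "LK (lpmon k u) (i, l) = 0" using assms by (simp add: lookup_lpmon)
    ultimately show "lpmon k u \<noteq> SG (i, l) 1 + m" by auto
  qed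
  ultimately show ?case by simp
qed (simp_all add: distrib_left phi_add)

lemma phi_Fcar:
  assumes "a \<in> Pcar n"
  shows "phi k e a \<in> Fcar n"
  unfolding Fcar_iff
proof (intro ballI)
  fix u assume "u \<in> KS (phi k e a)"
  then have "lpmon k u \<in> KS a" by (auto simp: lookup_phi in_keys_iff split: if_splits)
  then have "mlet n (lpmon k u)" using assms unfolding Pcar_def mlet_def by fastforce
  then show "set u \<subseteq> {1..n}" by (simp add: mlet_lpmon)
qed


lemma Pcar_iff: "p \<in> Pcar n \<longleftrightarrow> (\<forall>m\<in>KS p. \<forall>x\<in>KS m. 1 \<le> fst x \<and> fst x \<le> n \<and> 1 \<le> snd x)"
  by (simp add: Pcar_def case_prod_unfold)

lemma Pdcar_iff: "p \<in> Pdcar n d \<longleftrightarrow> (\<forall>m\<in>KS p. \<forall>x\<in>KS m. 1 \<le> fst x \<and> fst x \<le> n \<and> 1 \<le> snd x \<and> snd x \<le> d)"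
  by (simp add: Pdcar_def case_prod_unfold)

lemma Pcar_add: "p \<in> Pcar n \<Longrightarrow> q \<in> Pcar n \<Longrightarrow> p + q \<in> Pcar n"
  using keys_add[of p q] unfolding Pcar_iff by blast
lemma Pdcar_add: "p \<in> Pdcar n d \<Longrightarrow> q \<in> Pdcar n d \<Longrightarrow> p + q \<in> Pdcar n d"
  using keys_add[of p q] unfolding Pdcar_iff by blast
lemma Pcar_uminus: "p \<in> Pcar n \<Longrightarrow> - p \<in> Pcar n"
  unfolding Pcar_iff by simp
lemma Pcar_mult: "p \<in> Pcar n \<Longrightarrow> q \<in> Pcar n \<Longrightarrow> (p :: 'k::comm_ring_1 cpoly) * q \<in> Pcar n"
  using keys_mult[of p q] unfolding Pcar_iff by (fastforce simp: keys_add_nat)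
lemma Pdcar_mult: "p \<in> Pdcar n d \<Longrightarrow> q \<in> Pdcar n d \<Longrightarrow> (p :: 'k::comm_ring_1 cpoly) * q \<in> Pdcar n d"
  using keys_mult[of p q] unfolding Pdcar_iff by (fastforce simp: keys_add_nat)
lemma Pcar_one: "(1 :: 'k::comm_ring_1 cpoly) \<in> Pcar n"
proof -
  have "(1 :: 'k cpoly) = SG 0 1" by simp
  then show ?thesis unfolding Pcar_iff by simp
qed
lemma Pcar_zero[simp]: "0 \<in> Pcar n"
  unfolding Pcar_iff by simp
lemma Pdcar_zero[simp]: "0 \<in> Pdcar n d"
  unfolding Pdcar_iff by simp
lemma Pdcar_Pcar: "p \<in> Pdcar n d \<Longrightarrow> p \<in> Pcar n"
  unfolding Pdcar_iff Pcar_iff by blast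
lemma Pcar_minus_one: "(- 1 :: 'k::comm_ring_1 cpoly) \<in> Pcar n"
  by (rule Pcar_uminus) (rule Pcar_one)

lemma Pcar_iota:
  assumes "f \<in> Fcar n"
  shows "iota_sh k f \<in> Pcar n"
proof (rule pm_induct_keys[of "\<lambda>q. iota_sh k q \<in> Pcar n" f])
  fix w c assume "w \<in> KS f"
  then have "set w \<subseteq> {1..n}" using assms by (simp add: Fcar_iff)
  then show "iota_sh k (SG w c) \<in> Pcar n"
    by (auto simp: iota_single Pcar_iff keys_lpmon subset_iff)
qed (auto simp: iota_add Pcar_add)

lemma Pdcar_iota:
  assumes "f \<in> Fcar n" "fhom l f" "k + l \<le> d"
  shows "iota_sh k f \<in> Pdcar n d"
proof (rule pm_induct_keys[of "\<lambda>q. iota_sh k q \<in> Pdcar n d" f])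
  fix w c assume w: "w \<in> KS f"
  then have "set w \<subseteq> {1..n}" using assms by (simp add: Fcar_iff)
  moreover have "length w = l" using w assms(2) by (simp add: fhom_def)
  ultimately show "iota_sh k (SG w c) \<in> Pdcar n d"
    using assms(3) by (auto simp: iota_single Pdcar_iff keys_lpmon subset_iff)
qed (auto simp: iota_add Pdcar_add)

lemma sum_nth_map2:
  "length as = length gs \<Longrightarrow> (\<Sum>t<length as. as ! t * gs ! t) = sum_list (map2 (*) as gs)"
  by (induction as gs rule: list_induct2) (simp_all add: sum.lessThan_Suc_shift del: sum.lessThan_Suc)

lemma LP_alt: "P \<in> LPideal n I \<longleftrightarrow> (\<exists>as gs. length as = length gs \<and> set as \<subseteq> Pcar n \<and> set gs \<subseteq> LPgens n I \<and>
   P = sum_list (map2 (*) as gs))"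
proof
  assume "P \<in> LPideal n I"
  then obtain as gs where a: "P = (\<Sum>t<length as. as ! t * gs ! t)" "length as = length gs"
    "set as \<subseteq> Pcar n" "set gs \<subseteq> LPgens n I" unfolding LPideal_def by blast
  moreover have "P = sum_list (map2 (*) as gs)" by (simp only: a(1) sum_nth_map2[OF a(2)])
  ultimately show "\<exists>as gs. length as = length gs \<and> set as \<subseteq> Pcar n \<and> set gs \<subseteq> LPgens n I \<and>
   P = sum_list (map2 (*) as gs)" by blast
next
  assume "\<exists>as gs. length as = length gs \<and> set as \<subseteq> Pcar n \<and> set gs \<subseteq> LPgens n I \<and>
   P = sum_list (map2 (*) as gs)"
  then obtain as gs where a: "P = sum_list (map2 (*) as gs)" "length as = length gs"
    "set as \<subseteq> Pcar n" "set gs \<subseteq> LPgens n I" by blast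
  moreover have "P = (\<Sum>t<length as. as ! t * gs ! t)" by (simp only: a(1) sum_nth_map2[OF a(2)])
  ultimately show "P \<in> LPideal n I" unfolding LPideal_def by blast
qed

context
  fixes n :: nat and I :: "'k::comm_ring_1 fpoly set"
begin

lemma LP_zero[simp]: "0 \<in> LPideal n I"
  unfolding LP_alt by (rule exI[of _ "[]"], rule exI[of _ "[]"]) simp

lemma LP_add: "P \<in> LPideal n I \<Longrightarrow> Q \<in> LPideal n I \<Longrightarrow> P + Q \<in> LPideal n I"
  unfolding LP_alt
proof (elim exE conjE)
  fix as gs bs hs
  assume a: "length as = length gs" "set as \<subseteq> Pcar n" "set gs \<subseteq> LPgens n I" "P = sum_list (map2 (*) as gs)"
     and b: "length bs = length hs" "set bs \<subseteq> Pcar n" "set hs \<subseteq> LPgens n I" "Q = sum_list (map2 (*) bs hs)"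
  show "\<exists>as gs. length as = length gs \<and> set as \<subseteq> Pcar n \<and> set gs \<subseteq> LPgens n I \<and> P + Q = sum_list (map2 (*) as gs)"
    by (rule exI[of _ "as @ bs"], rule exI[of _ "gs @ hs"]) (use a b in \<open>simp add: zip_append\<close>)
qed

lemma LP_lmult: "c \<in> Pcar n \<Longrightarrow> P \<in> LPideal n I \<Longrightarrow> c * P \<in> LPideal n I"
  unfolding LP_alt
proof (elim exE conjE)
  fix as gs
  assume c: "c \<in> Pcar n" and a: "length as = length gs" "set as \<subseteq> Pcar n" "set gs \<subseteq> LPgens n I" "P = sum_list (map2 (*) as gs)"
  have "c * sum_list (map2 (*) as gs) = sum_list (map2 (*) (map ((*) c) as) gs)"
    using a(1) by (induction as gs rule: list_induct2) (simp_all add: distrib_left mult.assoc)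
  moreover have "set (map ((*) c) as) \<subseteq> Pcar n" using a(2) c by (auto intro: Pcar_mult)
  ultimately show "\<exists>as gs. length as = length gs \<and> set as \<subseteq> Pcar n \<and> set gs \<subseteq> LPgens n I \<and> c * P = sum_list (map2 (*) as gs)"
    using a by (intro exI[of _ "map ((*) c) as"] exI[of _ gs]) simp
qed

lemma LP_rmult: "c \<in> Pcar n \<Longrightarrow> P \<in> LPideal n I \<Longrightarrow> P * c \<in> LPideal n I"
  by (metis LP_lmult mult.commute)

lemma LP_gen: "a \<in> Pcar n \<Longrightarrow> g \<in> LPgens n I \<Longrightarrow> a * g \<in> LPideal n I"
  unfolding LP_alt by (intro exI[of _ "[a]"] exI[of _ "[g]"]) simp

lemma LP_uminus: "P \<in> LPideal n I \<Longrightarrow> - P \<in> LPideal n I"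
  using LP_lmult[OF Pcar_minus_one] by simp

lemma LP_diff: "P \<in> LPideal n I \<Longrightarrow> Q \<in> LPideal n I \<Longrightarrow> P - Q \<in> LPideal n I"
  using LP_add[of P "- Q"] LP_uminus[of Q] by (simp only: diff_conv_add_uminus)

lemma LP_sum: "(\<And>x. x \<in> A \<Longrightarrow> f x \<in> LPideal n I) \<Longrightarrow> sum f A \<in> LPideal n I"
  by (induction A rule: infinite_finite_induct) (auto intro: LP_add)

lemma LP_iota: assumes "p \<in> I" shows "iota_sh k p \<in> LPideal n I"
proof -
  have "iota_sh k p \<in> LPgens n I" unfolding LPgens_def using assms by blast
  from LP_gen[OF Pcar_one this] show ?thesis by simp
qed

lemma LP_trans: "P - Q \<in> LPideal n I \<Longrightarrow> Q - R \<in> LPideal n I \<Longrightarrow> P - R \<in> LPideal n I"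
  using LP_add[of "P - Q" "Q - R"] by simp

lemma LP_sym: "P - Q \<in> LPideal n I \<Longrightarrow> Q - P \<in> LPideal n I"
  using LP_uminus[of "P - Q"] by simp

end

lemma phi_Qgen:
  "phi k e (SG m c * (X i j * X i' j) :: 'k::comm_ring_1 cpoly) = 0"
proof -
  have "SG m c * (X i j * X i' j) = SG (m + SG (i, j) 1 + SG (i', j) 1) c"
    by (simp add: X_def mult_single add.assoc)
  moreover have "phi k e (SG (m + SG (i, j) 1 + SG (i', j) 1) c) = 0"
  proof (rule phi_single_none)
    fix u :: "nat list"
    let ?M = "m + SG (i, j) 1 + SG (i', j) 1"
    show "lpmon k u \<noteq> ?M"
    proof
      assume H: "lpmon k u = ?M"
      show False
      proof (cases "i = i'")
        case True
        have "LK ?M (i, j) \<ge> 2" using True by (simp add: lookup_add)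
        then show False using H lookup_lpmon_le1[of k u "(i, j)"] by simp
      next
        case False
        have "LK ?M (i, j) \<noteq> 0" "LK ?M (i', j) \<noteq> 0" by (simp_all add: lookup_add)
        then have "LK (lpmon k u) (i, j) \<noteq> 0" "LK (lpmon k u) (i', j) \<noteq> 0" using H by simp_all
        then have "u ! (j - k - 1) = i" "u ! (j - k - 1) = i'" by (simp_all add: lookup_lpmon split: if_splits)
        then show False using False by simp
      qed
    qed
  qed
  ultimately show ?thesis by simp
qed

context
  fixes n :: nat and I :: "'k::field fpoly set"
  assumes I: "graded_ideal n I"
begin

lemma phi_Igen_hom:
  assumes p: "p \<in> I" "fhom l p" and m: "mlet n m"
  shows "phi k e (SG m c * iota_sh k' p) \<in> I"
proof (cases "\<exists>w\<in>KS p. \<exists>u. length u = e \<and> lpmon k u = m + lpmon k' w")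
  case True
  then obtain w u where w: "w \<in> KS p" and u: "length u = e" "lpmon k u = m + lpmon k' w" by blast
  have lw: "length w = l" using w p(2) by (simp add: fhom_def)
  obtain u1 u2 where U: "\<forall>w'. length w' = l \<longrightarrow> m + lpmon k' w' = lpmon k (u1 @ w' @ u2)"
      and L: "set u1 \<subseteq> {1..n}" "set u2 \<subseteq> {1..n}"
  proof (cases "w = []")
    case True
    then have "m = lpmon k u" using u by simp
    moreover have "l = 0" using True lw by simp
    ultimately show ?thesis using m by (intro that[of u "[]"]) (auto simp: mlet_lpmon)
  next
    case False
    from lpmon_mid[OF u(2) False] obtain u1 u2 where
      "u = u1 @ w @ u2" "k' = k + length u1" and mm: "m = lpmon k u1 + lpmon (k' + length w) u2" by blast
    then have "\<forall>w'. length w' = l \<longrightarrow> m + lpmon k' w' = lpmon k (u1 @ w' @ u2)"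
      using lw by (auto simp: lpmon_append ac_simps)
    moreover have "set u1 \<subseteq> {1..n}" "set u2 \<subseteq> {1..n}"
      using m unfolding mm by (simp_all add: mlet_add mlet_lpmon)
    ultimately show ?thesis by (rule that)
  qed
  have H: "\<forall>w\<in>KS p. length w = l" using p(2) by (simp add: fhom_def)
  have eq: "SG m c * iota_sh k' p = iota_sh k (SG u1 c * p * SG u2 1)"
  proof (rule pm_induct_keys[of "\<lambda>q. SG m c * iota_sh k' q = iota_sh k (SG u1 c * q * SG u2 1)" p])
    fix w x assume "w \<in> KS p"
    then have "length w = l" using H by auto
    then show "SG m c * iota_sh k' (SG w x) = iota_sh k (SG u1 c * SG w x * SG u2 1)"
      using U by (simp add: iota_single single_mult_list mult_single)
  qed (auto simp: distrib_left distrib_right iota_add)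
  have "SG u1 c * p * SG u2 1 \<in> I"
    using I_rmult[OF I _ I_lmult[OF I _ p(1)]] Fcar_single L by blast
  then show ?thesis unfolding eq phi_iota using I_fcomp[OF I] by blast
next
  case False
  have H: "\<forall>w\<in>KS p. length w = l" using p(2) by (simp add: fhom_def)
  have "phi k e (SG m c * iota_sh k' p) = 0"
  proof (rule pm_induct_keys[of "\<lambda>q. phi k e (SG m c * iota_sh k' q) = 0" p])
    fix w x assume w: "w \<in> KS p"
    show "phi k e (SG m c * iota_sh k' (SG w x)) = 0"
      unfolding iota_single mult_single
      by (rule phi_single_none) (use False w in auto)
  qed (auto simp: distrib_left iota_add phi_add)
  then show ?thesis using I_zero[OF I] by simp
qed

lemma phi_Igen:
  assumes p: "p \<in> I" and m: "mlet n m"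
  shows "phi k e (SG m c * iota_sh k' p) \<in> I"
proof -
  obtain N where N: "(\<Sum>l<N. fcomp l p) = p" using fcomp_decomp_ex by blast
  have "phi k e (SG m c * iota_sh k' p) = (\<Sum>l<N. phi k e (SG m c * iota_sh k' (fcomp l p)))"
    by (subst N[symmetric]) (simp add: iota_sum sum_distrib_left phi_sum)
  also have "\<dots> \<in> I"
    by (rule I_sum[OF I]) (rule phi_Igen_hom[OF I_fcomp[OF I p] fhom_fcomp m])
  finally show ?thesis .
qed

lemma phi_gen:
  assumes a: "a \<in> Pcar n" and g: "g \<in> LPgens n I"
  shows "phi k e (a * g) \<in> I"
proof (rule pm_induct_keys[of "\<lambda>q. phi k e (q * g) \<in> I" a])
  fix m c assume "m \<in> KS a"
  then have m: "mlet n m" using a unfolding Pcar_iff mlet_def by auto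
  from g show "phi k e (SG m c * g) \<in> I"
    unfolding LPgens_def
  proof (elim UnE CollectE exE conjE)
    fix i i' j assume "g = X i j * X i' j"
    then have "phi k e (SG m c * g) = 0" using phi_Qgen by simp
    then show ?thesis using I_zero[OF I] by simp
  next
    fix k' p assume "g = iota_sh k' p" "p \<in> I"
    then show ?thesis using phi_Igen m by simp
  qed
qed (auto simp: distrib_right phi_add I_add[OF I] I_zero[OF I])

lemma phi_LP:
  assumes "P \<in> LPideal n I"
  shows "phi k e P \<in> I"
proof -
  from assms obtain as gs where a: "length as = length gs" "set as \<subseteq> Pcar n" "set gs \<subseteq> LPgens n I"
    "P = sum_list (map2 (*) as gs)" unfolding LP_alt by blast
  have "phi k e (sum_list (map2 (*) as gs)) \<in> I"
    using a(1-3) by (induction as gs rule: list_induct2) (auto simp: phi_add I_add[OF I] I_zero[OF I] phi_gen)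
  then show ?thesis using a(4) by simp
qed

lemma iota_inj_LP:
  assumes "iota_sh k f \<in> LPideal n I"
  shows "f \<in> I"
proof -
  obtain N where N: "(\<Sum>l<N. fcomp l f) = f" using fcomp_decomp_ex by blast
  have "(\<Sum>l<N. phi k l (iota_sh k f)) \<in> I"
    by (rule I_sum[OF I]) (rule phi_LP[OF assms])
  then show ?thesis using N by (simp add: phi_iota)
qed

end


lemma sum_nth_map2':
  "length gs = length as \<Longrightarrow> (\<Sum>t<length gs. f (gs ! t) (as ! t)) = sum_list (map2 f gs as)"
  by (induction gs as rule: list_induct2) (simp_all add: sum.lessThan_Suc_shift del: sum.lessThan_Suc)

lemma rspan_alt: "rspanA n I m G v \<longleftrightarrow> (\<exists>gs as. length as = length gs \<and> set gs \<subseteq> G \<and> set as \<subseteq> Fcar n \<and>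
      vequivA I m v (\<lambda>i. sum_list (map2 (\<lambda>g a. g i * a) gs as)))"
proof -
  have e: "length as = length gs \<Longrightarrow> (\<lambda>i. \<Sum>t<length gs. fmul ((gs ! t) i) (as ! t)) = (\<lambda>i. sum_list (map2 (\<lambda>g a. g i * a) gs as))"
    for gs :: "(nat \<Rightarrow> 'a::ring fpoly) list" and as :: "'a fpoly list"
    using sum_nth_map2'[of gs as "\<lambda>g a. g _ * a"] by (auto simp: fmul_eq fun_eq_iff)
  show ?thesis unfolding rspanA_def
  proof
    assume "\<exists>gs as. length as = length gs \<and> set gs \<subseteq> G \<and> set as \<subseteq> Fcar n \<and>
      vequivA I m v (\<lambda>i. \<Sum>t<length gs. fmul ((gs ! t) i) (as ! t))"
    then obtain gs as where "length as = length gs" "set gs \<subseteq> G" "set as \<subseteq> Fcar n"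
      "vequivA I m v (\<lambda>i. \<Sum>t<length gs. fmul ((gs ! t) i) (as ! t))" by blast
    note f = this
    show "\<exists>gs as. length as = length gs \<and> set gs \<subseteq> G \<and> set as \<subseteq> Fcar n \<and>
      vequivA I m v (\<lambda>i. sum_list (map2 (\<lambda>g a. g i * a) gs as))" by (intro exI[where x=gs] exI[where x=as]) (use f in \<open>simp add: e\<close>)
  next
    assume "\<exists>gs as. length as = length gs \<and> set gs \<subseteq> G \<and> set as \<subseteq> Fcar n \<and>
      vequivA I m v (\<lambda>i. sum_list (map2 (\<lambda>g a. g i * a) gs as))"
    then obtain gs as where "length as = length gs" "set gs \<subseteq> G" "set as \<subseteq> Fcar n"
      "vequivA I m v (\<lambda>i. sum_list (map2 (\<lambda>g a. g i * a) gs as))" by blast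
    note f = this
    show "\<exists>gs as. length as = length gs \<and> set gs \<subseteq> G \<and> set as \<subseteq> Fcar n \<and>
      vequivA I m v (\<lambda>i. \<Sum>t<length gs. fmul ((gs ! t) i) (as ! t))" by (intro exI[where x=gs] exI[where x=as]) (use f in \<open>simp add: e\<close>)
  qed
qed

lemma span_alt: "spanSd n I d m G v \<longleftrightarrow> (\<exists>gs as. length as = length gs \<and> set gs \<subseteq> G \<and> set as \<subseteq> Pdcar n d \<and>
      vequivS n I m v (\<lambda>i. sum_list (map2 (\<lambda>g a. g i * a) gs as)))"
proof -
  have e: "length as = length gs \<Longrightarrow> (\<lambda>i. \<Sum>t<length gs. (gs ! t) i * (as ! t)) = (\<lambda>i. sum_list (map2 (\<lambda>g a. g i * a) gs as))"
    for gs :: "(nat \<Rightarrow> 'a::comm_ring_1 cpoly) list" and as :: "'a cpoly list"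
    using sum_nth_map2'[of gs as "\<lambda>g a. g _ * a"] by (auto simp: fun_eq_iff)
  show ?thesis unfolding spanSd_def
  proof
    assume "\<exists>gs as. length as = length gs \<and> set gs \<subseteq> G \<and> set as \<subseteq> Pdcar n d \<and>
      vequivS n I m v (\<lambda>i. \<Sum>t<length gs. (gs ! t) i * (as ! t))"
    then obtain gs as where "length as = length gs" "set gs \<subseteq> G" "set as \<subseteq> Pdcar n d"
      "vequivS n I m v (\<lambda>i. \<Sum>t<length gs. (gs ! t) i * (as ! t))" by blast
    note f = this
    show "\<exists>gs as. length as = length gs \<and> set gs \<subseteq> G \<and> set as \<subseteq> Pdcar n d \<and>
      vequivS n I m v (\<lambda>i. sum_list (map2 (\<lambda>g a. g i * a) gs as))" by (intro exI[where x=gs] exI[where x=as]) (use f in \<open>simp add: e\<close>)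
  next
    assume "\<exists>gs as. length as = length gs \<and> set gs \<subseteq> G \<and> set as \<subseteq> Pdcar n d \<and>
      vequivS n I m v (\<lambda>i. sum_list (map2 (\<lambda>g a. g i * a) gs as))"
    then obtain gs as where "length as = length gs" "set gs \<subseteq> G" "set as \<subseteq> Pdcar n d"
      "vequivS n I m v (\<lambda>i. sum_list (map2 (\<lambda>g a. g i * a) gs as))" by blast
    note f = this
    show "\<exists>gs as. length as = length gs \<and> set gs \<subseteq> G \<and> set as \<subseteq> Pdcar n d \<and>
      vequivS n I m v (\<lambda>i. \<Sum>t<length gs. (gs ! t) i * (as ! t))" by (intro exI[where x=gs] exI[where x=as]) (use f in \<open>simp add: e\<close>)
  qed
qed

lemma mult_single_nil_neg: "(p::'k::ring_1 fpoly) * SG [] (-1) = - p"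
  by (induction p rule: pm_induct) (auto simp: single_mult_list distrib_right single_uminus)

lemma mult_single_nil_one: "(p::'k::ring_1 fpoly) * SG [] 1 = p"
  by (induction p rule: pm_induct) (auto simp: single_mult_list distrib_right)

lemma mult_single_nil_comm: "(p::'k::comm_ring_1 fpoly) * SG [] c = SG [] c * p"
  by (induction p rule: pm_induct) (auto simp: single_mult_list distrib_right distrib_left mult.commute)

context
  fixes n :: nat and I :: "'k::field fpoly set"
  assumes I: "graded_ideal n I"
begin

lemma vA_refl: "vequivA I m v v"
  by (simp add: vequivA_def I_zero[OF I])
lemma vA_sym: "vequivA I m v w \<Longrightarrow> vequivA I m w v"
  by (simp add: vequivA_def I_sym[OF I])
lemma vA_trans: "vequivA I m u v \<Longrightarrow> vequivA I m v w \<Longrightarrow> vequivA I m u w"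
  unfolding vequivA_def using I_diff_cancel[OF I] by blast
lemma vA_add: "vequivA I m u v \<Longrightarrow> vequivA I m u' v' \<Longrightarrow> vequivA I m (\<lambda>i. u i + u' i) (\<lambda>i. v i + v' i)"
proof -
  have e: "(a + b) - (c + d) = (a - c) + (b - d)" for a b c d :: "'k fpoly" by simp
  show "vequivA I m u v \<Longrightarrow> vequivA I m u' v' \<Longrightarrow> vequivA I m (\<lambda>i. u i + u' i) (\<lambda>i. v i + v' i)"
    unfolding vequivA_def e using I_add[OF I] by blast
qed
lemma vA_rmult: "vequivA I m u v \<Longrightarrow> c \<in> Fcar n \<Longrightarrow> vequivA I m (\<lambda>i. u i * c) (\<lambda>i. v i * c)"
  unfolding vequivA_def using I_rmult[OF I] by (simp add: left_diff_distrib[symmetric])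

lemma R_zero: "rspanA n I m G (\<lambda>i. 0)"
  unfolding rspan_alt by (rule exI[where x="[]"], rule exI[where x="[]"]) (simp add: vA_refl)

lemma R_equiv: "rspanA n I m G v \<Longrightarrow> vequivA I m v' v \<Longrightarrow> rspanA n I m G v'"
  unfolding rspan_alt using vA_trans by blast

lemma R_add:
  assumes "rspanA n I m G v" "rspanA n I m G w"
  shows "rspanA n I m G (\<lambda>i. v i + w i)"
proof -
  obtain gs as where a: "length as = length gs" "set gs \<subseteq> G" "set as \<subseteq> Fcar n"
      "vequivA I m v (\<lambda>i. sum_list (map2 (\<lambda>g a. g i * a) gs as))" using assms(1) unfolding rspan_alt by blast
  obtain hs bs where b: "length bs = length hs" "set hs \<subseteq> G" "set bs \<subseteq> Fcar n"
      "vequivA I m w (\<lambda>i. sum_list (map2 (\<lambda>g a. g i * a) hs bs))" using assms(2) unfolding rspan_alt by blast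
  have "vequivA I m (\<lambda>i. v i + w i) (\<lambda>i. sum_list (map2 (\<lambda>g a. g i * a) (gs @ hs) (as @ bs)))"
    using vA_add[OF a(4) b(4)] a(1) b(1) by (simp add: zip_append)
  then show ?thesis unfolding rspan_alt using a b
    by (intro exI[where x="gs @ hs"] exI[where x="as @ bs"]) auto
qed

lemma R_gen: "u \<in> G \<Longrightarrow> b \<in> Fcar n \<Longrightarrow> rspanA n I m G (\<lambda>i. u i * b)"
  unfolding rspan_alt by (intro exI[where x="[u]"] exI[where x="[b]"]) (simp add: vA_refl)

lemma R_rmult:
  assumes "rspanA n I m G v" "c \<in> Fcar n"
  shows "rspanA n I m G (\<lambda>i. v i * c)"
proof -
  obtain gs as where a: "length as = length gs" "set gs \<subseteq> G" "set as \<subseteq> Fcar n"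
      "vequivA I m v (\<lambda>i. sum_list (map2 (\<lambda>g a. g i * a) gs as))" using assms(1) unfolding rspan_alt by blast
  have "sum_list (map2 (\<lambda>g a. g i * a) gs as) * c = sum_list (map2 (\<lambda>g a. g i * a) gs (map (\<lambda>a. a * c) as))" for i
    using a(1) by (induction as gs rule: list_induct2) (simp_all add: distrib_right mult.assoc)
  then have "vequivA I m (\<lambda>i. v i * c) (\<lambda>i. sum_list (map2 (\<lambda>g a. g i * a) gs (map (\<lambda>a. a * c) as)))"
    using vA_rmult[OF a(4) assms(2)] by simp
  moreover have "set (map (\<lambda>a. a * c) as) \<subseteq> Fcar n" using a(3) assms(2) by (auto intro: Fcar_mult)
  ultimately show ?thesis unfolding rspan_alt using a
    by (intro exI[where x="gs"] exI[where x="map (\<lambda>a. a * c) as"]) auto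
qed

lemma R_mono: "rspanA n I m G v \<Longrightarrow> G \<subseteq> G' \<Longrightarrow> rspanA n I m G' v"
  unfolding rspan_alt by blast

lemma R_sum:
  "(\<And>x. x \<in> A \<Longrightarrow> rspanA n I m G (f x)) \<Longrightarrow> rspanA n I m G (\<lambda>i. \<Sum>x\<in>A. f x i)"
proof (induction A rule: infinite_finite_induct)
  case (insert x F)
  then have "rspanA n I m G (\<lambda>i. f x i + (\<Sum>x\<in>F. f x i))" by (intro R_add) auto
  then show ?case using insert by simp
qed (simp_all add: R_zero)

lemma R_sumlist:
  assumes "length as = length gs" "set gs \<subseteq> G" "set as \<subseteq> Fcar n"
  shows "rspanA n I m G (\<lambda>i. sum_list (map2 (\<lambda>g a. g i * a) gs as))"
  unfolding rspan_alt using assms vA_refl by blast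

lemma R_trans:
  assumes "rspanA n I m G v" "\<And>u. u \<in> G \<Longrightarrow> rspanA n I m G' u"
  shows "rspanA n I m G' v"
proof -
  obtain gs as where a: "length as = length gs" "set gs \<subseteq> G" "set as \<subseteq> Fcar n"
      "vequivA I m v (\<lambda>i. sum_list (map2 (\<lambda>g a. g i * a) gs as))" using assms(1) unfolding rspan_alt by blast
  have "rspanA n I m G' (\<lambda>i. sum_list (map2 (\<lambda>g a. g i * a) gs as))"
    using a(1-3)
  proof (induction as gs rule: list_induct2)
    case Nil
    then show ?case by (simp add: R_zero)
  next
    case (Cons a as g gs)
    have "rspanA n I m G' (\<lambda>i. g i * a)" using Cons by (intro R_rmult assms(2)) auto
    moreover have "rspanA n I m G' (\<lambda>i. sum_list (map2 (\<lambda>g a. g i * a) gs as))" using Cons by auto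
    ultimately have "rspanA n I m G' (\<lambda>i. g i * a + sum_list (map2 (\<lambda>g a. g i * a) gs as))"
      by (rule R_add)
    then show ?case by simp
  qed
  then show ?thesis using R_equiv a(4) by blast
qed

lemma R_uminus: "rspanA n I m G v \<Longrightarrow> rspanA n I m G (\<lambda>i. - v i)"
  using R_rmult[of m G v "SG [] (-1)"] Fcar_single[of "[]" n "-1"] by (simp add: mult_single_nil_neg)

lemma R_diff: "rspanA n I m G v \<Longrightarrow> rspanA n I m G w \<Longrightarrow> rspanA n I m G (\<lambda>i. v i - w i)"
  using R_add[of m G v "\<lambda>i. - w i"] R_uminus[of m G w] by simp

end

context
  fixes n :: nat and I :: "'k::field fpoly set"
begin

lemma vS_refl: "vequivS n I m v v"
  by (simp add: vequivS_def)
lemma vS_sym: "vequivS n I m v w \<Longrightarrow> vequivS n I m w v"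
  by (simp add: vequivS_def LP_sym)
lemma vS_trans: "vequivS n I m u v \<Longrightarrow> vequivS n I m v w \<Longrightarrow> vequivS n I m u w"
  unfolding vequivS_def using LP_trans by blast
lemma vS_add: "vequivS n I m u v \<Longrightarrow> vequivS n I m u' v' \<Longrightarrow> vequivS n I m (\<lambda>i. u i + u' i) (\<lambda>i. v i + v' i)"
proof -
  have e: "(a + b) - (c + d) = (a - c) + (b - d)" for a b c d :: "'k cpoly" by simp
  show "vequivS n I m u v \<Longrightarrow> vequivS n I m u' v' \<Longrightarrow> vequivS n I m (\<lambda>i. u i + u' i) (\<lambda>i. v i + v' i)"
    unfolding vequivS_def e using LP_add by blast
qed
lemma vS_rmult: "vequivS n I m u v \<Longrightarrow> c \<in> Pcar n \<Longrightarrow> vequivS n I m (\<lambda>i. u i * c) (\<lambda>i. v i * c)"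
  unfolding vequivS_def left_diff_distrib[symmetric] using LP_rmult by blast

lemma S_zero: "spanSd n I d m G (\<lambda>i. 0)"
  unfolding span_alt by (rule exI[where x="[]"], rule exI[where x="[]"]) (simp add: vS_refl)

lemma S_equiv: "spanSd n I d m G v \<Longrightarrow> vequivS n I m v' v \<Longrightarrow> spanSd n I d m G v'"
  unfolding span_alt using vS_trans by blast

lemma S_add:
  assumes "spanSd n I d m G v" "spanSd n I d m G w"
  shows "spanSd n I d m G (\<lambda>i. v i + w i)"
proof -
  obtain gs as where a: "length as = length gs" "set gs \<subseteq> G" "set as \<subseteq> Pdcar n d"
      "vequivS n I m v (\<lambda>i. sum_list (map2 (\<lambda>g a. g i * a) gs as))" using assms(1) unfolding span_alt by blast
  obtain hs bs where b: "length bs = length hs" "set hs \<subseteq> G" "set bs \<subseteq> Pdcar n d"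
      "vequivS n I m w (\<lambda>i. sum_list (map2 (\<lambda>g a. g i * a) hs bs))" using assms(2) unfolding span_alt by blast
  have "vequivS n I m (\<lambda>i. v i + w i) (\<lambda>i. sum_list (map2 (\<lambda>g a. g i * a) (gs @ hs) (as @ bs)))"
    using vS_add[OF a(4) b(4)] a(1) b(1) by (simp add: zip_append)
  then show ?thesis unfolding span_alt using a b
    by (intro exI[where x="gs @ hs"] exI[where x="as @ bs"]) auto
qed

lemma S_gen: "u \<in> G \<Longrightarrow> b \<in> Pdcar n d \<Longrightarrow> spanSd n I d m G (\<lambda>i. u i * b)"
  unfolding span_alt by (intro exI[where x="[u]"] exI[where x="[b]"]) (simp add: vS_refl)

lemma S_sum:
  "(\<And>x. x \<in> A \<Longrightarrow> spanSd n I d m G (f x)) \<Longrightarrow> spanSd n I d m G (\<lambda>i. \<Sum>x\<in>A. f x i)"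
proof (induction A rule: infinite_finite_induct)
  case (insert x F)
  then have "spanSd n I d m G (\<lambda>i. f x i + (\<Sum>x\<in>F. f x i))" by (intro S_add) auto
  then show ?case using insert by simp
qed (simp_all add: S_zero)

end


definition trunc :: "(nat \<Rightarrow> nat) \<Rightarrow> nat \<Rightarrow> (nat \<Rightarrow> 'k::comm_monoid_add fpoly) \<Rightarrow> nat \<Rightarrow> 'k fpoly" where
  "trunc \<Delta> e v = (\<lambda>j. if \<Delta> j \<le> e then fcomp (e - \<Delta> j) (v j) else 0)"

definition LPv :: "(nat \<Rightarrow> nat) \<Rightarrow> (nat \<Rightarrow> 'k::comm_ring_1 fpoly) \<Rightarrow> nat \<Rightarrow> 'k cpoly" where
  "LPv \<Delta> v = (\<lambda>j. iota_sh (\<Delta> j) (v j))"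

definition ishom :: "(nat \<Rightarrow> nat) \<Rightarrow> nat \<Rightarrow> (nat \<Rightarrow> 'k::zero fpoly) \<Rightarrow> bool" where
  "ishom \<Delta> e v \<longleftrightarrow> (\<forall>j. if \<Delta> j \<le> e then fhom (e - \<Delta> j) (v j) else v j = 0)"

lemma ishom_trunc: "ishom \<Delta> e (trunc \<Delta> e v)"
  by (simp add: ishom_def trunc_def fhom_fcomp)

lemma trunc_ishom: "ishom \<Delta> e v \<Longrightarrow> trunc \<Delta> e v = v"
  by (auto simp: ishom_def trunc_def fun_eq_iff fhom_iff split: if_splits)

lemma trunc_trunc: "trunc \<Delta> e' (trunc \<Delta> e v) = (if e = e' then trunc \<Delta> e v else (\<lambda>j. 0))"
  by (auto simp: trunc_def fun_eq_iff fcomp_fcomp)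

lemma trunc_add: "trunc \<Delta> e (\<lambda>j. u j + v j) = (\<lambda>j. trunc \<Delta> e u j + trunc \<Delta> e v j)"
  by (auto simp: trunc_def fun_eq_iff fcomp_add)

lemma trunc_sum: "trunc \<Delta> e (\<lambda>j. \<Sum>x\<in>A. f x j) = (\<lambda>j. \<Sum>x\<in>A. trunc \<Delta> e (f x) j)"
  by (auto simp: trunc_def fun_eq_iff fcomp_sum)

lemma LPv_mult:
  assumes "ishom \<Delta> e v"
  shows "LPv \<Delta> (\<lambda>j. v j * c) j = LPv \<Delta> v j * iota_sh e c"
proof (cases "\<Delta> j \<le> e")
  case True
  then have "fhom (e - \<Delta> j) (v j)" using assms by (auto simp: ishom_def)
  from iota_mult[OF this] True show ?thesis by (simp add: LPv_def)
next
  case False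
  then have "v j = 0" using assms by (auto simp: ishom_def)
  then show ?thesis by (simp add: LPv_def)
qed

lemma sum_shift_if:
  fixes N a :: nat
  shows "(\<Sum>e<N. if a \<le> e then f (e - a) else 0) = (\<Sum>l<N - a. f l :: 'b::comm_monoid_add)"
proof (induction N)
  case (Suc N)
  show ?case
  proof (cases "a \<le> N")
    case True
    then have "Suc N - a = Suc (N - a)" by simp
    then show ?thesis using Suc True by simp
  next
    case False
    then have "Suc N - a = N - a" by simp
    then show ?thesis using Suc False by simp
  qed
qed simp

lemma trunc_decomp:
  "\<exists>N. \<forall>j\<in>{1..s}. (\<Sum>e<N. trunc \<Delta> e v j) = v j"
proof -
  define S where "S = (\<Union>j\<in>{1..s}. (\<lambda>w. \<Delta> j + length w) ` KS (v j))"
  have "finite S" unfolding S_def by auto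
  define N where "N = Suc (Max (insert 0 S))"
  have N: "x < N" if "x \<in> S" for x
    using that \<open>finite S\<close> unfolding N_def by (simp add: le_imp_less_Suc)
  have "(\<Sum>e<N. trunc \<Delta> e v j) = v j" if j: "j \<in> {1..s}" for j
  proof -
    have "(\<Sum>e<N. trunc \<Delta> e v j) = (\<Sum>l<N - \<Delta> j. fcomp l (v j))"
      unfolding trunc_def by (rule sum_shift_if)
    also have "\<dots> = v j"
    proof (rule fcomp_decomp, intro ballI)
      fix w assume "w \<in> KS (v j)"
      then have "\<Delta> j + length w \<in> S" using j unfolding S_def by auto
      then show "length w < N - \<Delta> j" using N by fastforce
    qed
    finally show ?thesis .
  qed
  then show ?thesis by blast
qed

context
  fixes n :: nat and I :: "'k::field fpoly set"
  assumes I: "graded_ideal n I"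
begin

lemma trunc_equiv:
  assumes "homA I s \<Delta> e v"
  shows "vequivA I s v (trunc \<Delta> e v)"
proof -
  obtain w where w: "vequivA I s v w" "\<forall>j\<in>{1..s}. if \<Delta> j \<le> e then fhom (e - \<Delta> j) (w j) else w j = 0"
    using assms unfolding homA_def by blast
  show ?thesis unfolding vequivA_def
  proof
    fix j assume j: "j \<in> {1..s}"
    have d: "v j - w j \<in> I" using w(1) j by (simp add: vequivA_def)
    show "v j - trunc \<Delta> e v j \<in> I"
    proof (cases "\<Delta> j \<le> e")
      case True
      have "fhom (e - \<Delta> j) (w j)" using w(2) j True by fastforce
      then have "fcomp (e - \<Delta> j) (w j) = w j" by (simp add: fhom_iff)
      then have eq: "v j - fcomp (e - \<Delta> j) (v j) = (v j - w j) - fcomp (e - \<Delta> j) (v j - w j)"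
        by (simp add: fcomp_diff)
      have "(v j - w j) - fcomp (e - \<Delta> j) (v j - w j) \<in> I"
        by (rule I_diff[OF I d I_fcomp[OF I d]])
      then have "v j - fcomp (e - \<Delta> j) (v j) \<in> I" by (subst eq)
      then show ?thesis using True by (simp add: trunc_def)
    next
      case False
      then show ?thesis using w(2) j d by (simp add: trunc_def)
    qed
  qed
qed

lemma homA_ishom: "ishom \<Delta> e v \<Longrightarrow> homA I s \<Delta> e v"
  unfolding homA_def ishom_def using vA_refl[OF I] by blast

lemma homA_trunc: "homA I s \<Delta> e (trunc \<Delta> e v)"
  by (rule homA_ishom) (rule ishom_trunc)

lemma trunc_vA: "vequivA I s u v \<Longrightarrow> vequivA I s (trunc \<Delta> e u) (trunc \<Delta> e v)"
  unfolding vequivA_def trunc_def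
  by (auto simp: fcomp_diff[symmetric] I_fcomp[OF I] I_zero[OF I])

lemma hom_unique:
  assumes "homA I s \<Delta> e v" "homA I s \<Delta> e' v" "e \<noteq> e'"
  shows "vequivA I s v (\<lambda>j. 0)"
proof -
  have "vequivA I s (trunc \<Delta> e' v) (trunc \<Delta> e' (trunc \<Delta> e v))"
    by (rule trunc_vA) (rule trunc_equiv[OF assms(1)])
  then have "vequivA I s (trunc \<Delta> e' v) (\<lambda>j. 0)" using assms(3) by (simp add: trunc_trunc)
  then show ?thesis using trunc_equiv[OF assms(2)] vA_trans[OF I] by blast
qed

lemma trunc_mult:
  assumes u: "homA I s \<Delta> eu u" and c: "c \<in> Fcar n"
  shows "vequivA I s (trunc \<Delta> e (\<lambda>j. u j * c)) (\<lambda>j. u j * (if eu \<le> e then fcomp (e - eu) c else 0))"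
  unfolding vequivA_def
proof
  fix j assume j: "j \<in> {1..s}"
  define c' where "c' = (if eu \<le> e then fcomp (e - eu) c else 0)"
  have c': "c' \<in> Fcar n" using c by (simp add: c'_def Fcar_fcomp)
  let ?u = "trunc \<Delta> eu u"
  have du: "u j - ?u j \<in> I" using trunc_equiv[OF u] j by (simp add: vequivA_def)
  have key: "trunc \<Delta> e (\<lambda>j. ?u j * c) j = ?u j * c'"
  proof (cases "\<Delta> j \<le> eu")
    case True
    have hu: "fhom (eu - \<Delta> j) (?u j)" using True by (simp add: trunc_def fhom_fcomp)
    show ?thesis
    proof (cases "eu \<le> e")
      case True
      then have "e - \<Delta> j = (eu - \<Delta> j) + (e - eu)" using \<open>\<Delta> j \<le> eu\<close> by simp
      then show ?thesis using fcomp_mult_hom[OF hu, of "e - eu" c] True \<open>\<Delta> j \<le> eu\<close>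
        by (simp add: trunc_def c'_def)
    next
      case False
      then show ?thesis using fcomp_mult_hom0[OF hu, of "e - \<Delta> j" c] \<open>\<Delta> j \<le> eu\<close>
        by (auto simp: trunc_def c'_def)
    qed
  next
    case False
    then show ?thesis by (simp add: trunc_def)
  qed
  have d1: "trunc \<Delta> e (\<lambda>j. u j * c) j - trunc \<Delta> e (\<lambda>j. ?u j * c) j \<in> I"
    using trunc_vA[where u="\<lambda>j. u j * c" and v="\<lambda>j. ?u j * c" and e=e and \<Delta>=\<Delta> and s=s] vA_rmult[OF I, of s u ?u c] trunc_equiv[OF u] c j
    by (simp add: vequivA_def)
  have d2: "u j * c' - ?u j * c' \<in> I"
    using I_rmult[OF I c' du] by (simp add: left_diff_distrib)
  have eq: "trunc \<Delta> e (\<lambda>j. u j * c) j - u j * c' =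
     (trunc \<Delta> e (\<lambda>j. u j * c) j - trunc \<Delta> e (\<lambda>j. ?u j * c) j) - (u j * c' - ?u j * c')"
    using key by simp
  have "(trunc \<Delta> e (\<lambda>j. u j * c) j - trunc \<Delta> e (\<lambda>j. ?u j * c) j) - (u j * c' - ?u j * c') \<in> I"
    by (rule I_diff[OF I d1 d2])
  then have "trunc \<Delta> e (\<lambda>j. u j * c) j - u j * c' \<in> I" by (subst eq)
  then show "trunc \<Delta> e (\<lambda>j. u j * c) j - u j * (if eu \<le> e then fcomp (e - eu) c else 0) \<in> I"
    by (simp only: c'_def)
qed

lemma LPv_vA: "vequivA I s u v \<Longrightarrow> vequivS n I s (LPv \<Delta> u) (LPv \<Delta> v)"
  unfolding vequivA_def vequivS_def LPv_def by (simp add: iota_diff[symmetric] LP_iota)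

end


lemma fhom0_single: assumes "fhom 0 p" shows "p = SG [] (LK p [])"
proof (rule poly_mapping_eqI)
  fix k :: "nat list"
  show "LK p k = LK (SG [] (LK p [])) k"
  proof (cases "k = []")
    case False
    then have "k \<notin> KS p" using assms by (auto simp: fhom_def)
    then show ?thesis using False by (simp add: lookup_single in_keys_iff)
  qed simp
qed

lemma finite_in_chain:
  assumes "finite F" "F \<subseteq> \<Union>C" "chain\<^sub>\<subseteq> C" "T0 \<in> C"
  shows "\<exists>T\<in>C. F \<subseteq> T \<and> T0 \<subseteq> T"
  using assms
proof (induction F rule: finite_induct)
  case empty
  then show ?case by blast
next
  case (insert x F)
  then obtain T where T: "T \<in> C" "F \<subseteq> T" "T0 \<subseteq> T" by blast
  obtain T' where T': "T' \<in> C" "x \<in> T'" using insert by blast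
  from insert(5) T(1) T'(1) have "T \<subseteq> T' \<or> T' \<subseteq> T" unfolding chain_subset_def by blast
  then show ?case using T T' by blast
qed

context
  fixes n :: nat and I :: "'k::field fpoly set"
  assumes I: "graded_ideal n I"
begin

lemma vA_sum:
  "(\<And>x. x \<in> A \<Longrightarrow> vequivA I m (f x) (f' x)) \<Longrightarrow> vequivA I m (\<lambda>j. \<Sum>x\<in>A. f x j) (\<lambda>j. \<Sum>x\<in>A. f' x j)"
proof (induction A rule: infinite_finite_induct)
  case (insert x F)
  then have "vequivA I m (\<lambda>j. f x j + (\<Sum>x\<in>F. f x j)) (\<lambda>j. f' x j + (\<Sum>x\<in>F. f' x j))"
    by (intro vA_add[OF I]) auto
  then show ?case using insert by simp
qed (simp_all add: vA_refl[OF I])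

lemma LPv_inj: "vequivS n I s (LPv \<Delta> u) (LPv \<Delta> v) \<Longrightarrow> vequivA I s u v"
  unfolding vequivS_def vequivA_def LPv_def by (auto simp: iota_diff[symmetric] intro: iota_inj_LP[OF I])

lemma R_trunc:
  assumes R: "rspanA n I s G v" and deg: "\<And>u. u \<in> G \<Longrightarrow> homA I s \<Delta> (deg u) u"
  shows "\<exists>gs as. length as = length gs \<and> set gs \<subseteq> G \<and> set as \<subseteq> Fcar n \<and>
     (\<forall>t<length gs. as ! t = 0 \<or> (deg (gs ! t) \<le> e \<and> fhom (e - deg (gs ! t)) (as ! t))) \<and>
     vequivA I s (trunc \<Delta> e v) (\<lambda>j. \<Sum>t<length gs. (gs ! t) j * as ! t)"
proof -
  obtain gs as where a: "length as = length gs" "set gs \<subseteq> G" "set as \<subseteq> Fcar n"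
    "vequivA I s v (\<lambda>i. \<Sum>t<length gs. fmul ((gs ! t) i) (as ! t))"
    using R unfolding rspanA_def by blast
  define as' where "as' = map (\<lambda>t. if deg (gs ! t) \<le> e then fcomp (e - deg (gs ! t)) (as ! t) else 0) [0..<length gs]"
  have las: "length as' = length gs" by (simp add: as'_def)
  have nth: "t < length gs \<Longrightarrow> as' ! t = (if deg (gs ! t) \<le> e then fcomp (e - deg (gs ! t)) (as ! t) else 0)" for t
    by (simp add: as'_def)
  have F: "set as' \<subseteq> Fcar n"
  proof
    fix x assume "x \<in> set as'"
    then obtain t where t: "t < length gs" "x = as' ! t" using las by (metis in_set_conv_nth)
    have "as ! t \<in> Fcar n" using a(1,3) t(1) by (metis nth_mem subsetD)
    then show "x \<in> Fcar n" using t nth by (simp add: Fcar_fcomp)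
  qed
  have H: "\<forall>t<length gs. as' ! t = 0 \<or> (deg (gs ! t) \<le> e \<and> fhom (e - deg (gs ! t)) (as' ! t))"
    using nth by (auto simp: fhom_fcomp)
  have "vequivA I s (trunc \<Delta> e v) (trunc \<Delta> e (\<lambda>i. \<Sum>t<length gs. (gs ! t) i * as ! t))"
    using trunc_vA[OF I a(4)] by (simp add: fmul_eq)
  also have "trunc \<Delta> e (\<lambda>i. \<Sum>t<length gs. (gs ! t) i * as ! t) = (\<lambda>i. \<Sum>t<length gs. trunc \<Delta> e (\<lambda>i. (gs ! t) i * as ! t) i)"
    by (rule trunc_sum)
  finally have 1: "vequivA I s (trunc \<Delta> e v) (\<lambda>i. \<Sum>t<length gs. trunc \<Delta> e (\<lambda>i. (gs ! t) i * as ! t) i)" .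
  have "vequivA I s (\<lambda>i. \<Sum>t<length gs. trunc \<Delta> e (\<lambda>i. (gs ! t) i * as ! t) i) (\<lambda>i. \<Sum>t<length gs. (gs ! t) i * as' ! t)"
  proof (rule vA_sum)
    fix t assume "t \<in> {..<length gs}"
    then have t: "t < length gs" by simp
    have "gs ! t \<in> G" "as ! t \<in> Fcar n" using a(1-3) t by (metis nth_mem subsetD)+
    then show "vequivA I s (trunc \<Delta> e (\<lambda>i. (gs ! t) i * as ! t)) (\<lambda>i. (gs ! t) i * as' ! t)"
      using trunc_mult[OF I deg, of "gs ! t" "as ! t" e] nth[OF t] by simp
  qed
  with 1 have "vequivA I s (trunc \<Delta> e v) (\<lambda>i. \<Sum>t<length gs. (gs ! t) i * as' ! t)" by (rule vA_trans[OF I])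
  then show ?thesis using las a(2) F H by (intro exI[where x=gs] exI[where x=as']) auto
qed

end

definition Vdeg where
  "Vdeg n I r s \<Delta> g e = {v. syzA n I r s g v \<and> homA I s \<Delta> e v}"

definition low where
  "low n I r s \<Delta> g e = {u. syzA n I r s g u \<and> (\<exists>e'<e. homA I s \<Delta> e' u)}"

definition good where
  "good n I r s \<Delta> g e T \<longleftrightarrow> T \<subseteq> Vdeg n I r s \<Delta> g e \<and>
     (\<forall>x\<in>T. \<not> rspanA n I s (low n I r s \<Delta> g e \<union> {w\<in>T. \<not> vequivA I s w x}) x)"

definition Hmax where
  "Hmax n I r s \<Delta> g e = (SOME T. good n I r s \<Delta> g e T \<and> (\<forall>T'. good n I r s \<Delta> g e T' \<and> T \<subseteq> T' \<longrightarrow> T' = T))"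

context
  fixes n r s :: nat and I :: "'k::field fpoly set" and g :: "nat \<Rightarrow> nat \<Rightarrow> 'k fpoly" and \<Delta> :: "nat \<Rightarrow> nat"
  assumes I: "graded_ideal n I"
begin

lemma good_chain:
  assumes C: "C \<in> chains {T. good n I r s \<Delta> g e T}"
  shows "good n I r s \<Delta> g e (\<Union>C)"
proof -
  have CA: "\<And>T. T \<in> C \<Longrightarrow> good n I r s \<Delta> g e T" and ch: "chain\<^sub>\<subseteq> C"
    using C unfolding chains_def by auto
  show ?thesis unfolding good_def
  proof (intro conjI ballI)
    show "\<Union>C \<subseteq> Vdeg n I r s \<Delta> g e" using CA unfolding good_def by blast
  next
    fix x assume x: "x \<in> \<Union>C"
    then obtain T0 where T0: "T0 \<in> C" "x \<in> T0" by blast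
    show "\<not> rspanA n I s (low n I r s \<Delta> g e \<union> {w \<in> \<Union>C. \<not> vequivA I s w x}) x"
    proof
      assume "rspanA n I s (low n I r s \<Delta> g e \<union> {w \<in> \<Union>C. \<not> vequivA I s w x}) x"
      then obtain gs as where a: "length as = length gs" "set gs \<subseteq> low n I r s \<Delta> g e \<union> {w \<in> \<Union>C. \<not> vequivA I s w x}"
        "set as \<subseteq> Fcar n" "vequivA I s x (\<lambda>i. sum_list (map2 (\<lambda>g a. g i * a) gs as))"
        unfolding rspan_alt by blast
      have "finite (set gs \<inter> \<Union>C)" by simp
      from finite_in_chain[OF this _ ch T0(1)] obtain T where T: "T \<in> C" "set gs \<inter> \<Union>C \<subseteq> T" "T0 \<subseteq> T"
        by blast
      have "set gs \<subseteq> low n I r s \<Delta> g e \<union> {w \<in> T. \<not> vequivA I s w x}" using a(2) T(2) by blast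
      then have "rspanA n I s (low n I r s \<Delta> g e \<union> {w \<in> T. \<not> vequivA I s w x}) x"
        unfolding rspan_alt using a by blast
      moreover have "x \<in> T" using T T0 by blast
      ultimately show False using CA[OF T(1)] unfolding good_def by blast
    qed
  qed
qed

lemma Hmax_ex: "\<exists>T. good n I r s \<Delta> g e T \<and> (\<forall>T'. good n I r s \<Delta> g e T' \<and> T \<subseteq> T' \<longrightarrow> T' = T)"
proof -
  have "\<exists>M\<in>{T. good n I r s \<Delta> g e T}. \<forall>X\<in>{T. good n I r s \<Delta> g e T}. M \<subseteq> X \<longrightarrow> X = M"
  proof (rule Zorn_Lemma2, intro ballI)
    fix C assume C: "C \<in> chains {T. good n I r s \<Delta> g e T}"
    show "\<exists>U\<in>{T. good n I r s \<Delta> g e T}. \<forall>X\<in>C. X \<subseteq> U"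
      using good_chain[OF C] by blast
  qed
  then show ?thesis by blast
qed

lemma Hmax_good: "good n I r s \<Delta> g e (Hmax n I r s \<Delta> g e)"
  and Hmax_max: "good n I r s \<Delta> g e T' \<Longrightarrow> Hmax n I r s \<Delta> g e \<subseteq> T' \<Longrightarrow> T' = Hmax n I r s \<Delta> g e"
  using someI_ex[OF Hmax_ex] unfolding Hmax_def by blast+

lemma good_nonzero:
  assumes "good n I r s \<Delta> g e T" "x \<in> T"
  shows "\<not> vequivA I s x (\<lambda>j. 0)"
  using assms R_equiv[OF I R_zero[OF I]] unfolding good_def by blast

lemma Hmax_span:
  assumes v: "v \<in> Vdeg n I r s \<Delta> g e"
  shows "rspanA n I s (low n I r s \<Delta> g e \<union> Hmax n I r s \<Delta> g e) v"
proof (rule ccontr)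
  let ?L = "low n I r s \<Delta> g e" and ?T = "Hmax n I r s \<Delta> g e"
  assume nv: "\<not> rspanA n I s (?L \<union> ?T) v"
  have gT: "good n I r s \<Delta> g e ?T" by (rule Hmax_good)
  have vT: "v \<notin> ?T"
  proof
    assume "v \<in> ?T"
    then have "rspanA n I s (?L \<union> ?T) (\<lambda>i. v i * SG [] 1)"
      by (intro R_gen[OF I] Fcar_single) auto
    then show False using nv by (simp add: mult_single_nil_one)
  qed
  have vhom: "homA I s \<Delta> e v" using v by (simp add: Vdeg_def)
  have "good n I r s \<Delta> g e (insert v ?T)"
    unfolding good_def
  proof (intro conjI ballI)
    show "insert v ?T \<subseteq> Vdeg n I r s \<Delta> g e" using v gT by (simp add: good_def)
  next
    fix x assume x: "x \<in> insert v ?T"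
    show "\<not> rspanA n I s (?L \<union> {w \<in> insert v ?T. \<not> vequivA I s w x}) x"
    proof (cases "x = v")
      case True
      show ?thesis
      proof
        assume "rspanA n I s (?L \<union> {w \<in> insert v ?T. \<not> vequivA I s w x}) x"
        moreover have "?L \<union> {w \<in> insert v ?T. \<not> vequivA I s w x} \<subseteq> ?L \<union> ?T"
          using True vA_refl[OF I, of s v] by auto
        ultimately show False using nv True R_mono[OF I] by blast
      qed
    next
      case False
      then have xT: "x \<in> ?T" using x by simp
      show ?thesis
      proof
        assume R: "rspanA n I s (?L \<union> {w \<in> insert v ?T. \<not> vequivA I s w x}) x"
        show False
        proof (cases "vequivA I s v x")
          case True
          have "rspanA n I s (?L \<union> ?T) (\<lambda>i. x i * SG [] 1)"
            using xT by (intro R_gen[OF I] Fcar_single) auto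
          then have "rspanA n I s (?L \<union> ?T) x" by (simp add: mult_single_nil_one)
          then show False using nv R_equiv[OF I] True by blast
        next
          case False
          let ?G = "?L \<union> {w \<in> insert v ?T. \<not> vequivA I s w x}"
          let ?G' = "?L \<union> {w \<in> ?T. \<not> vequivA I s w x}"
          define deg where "deg u = (if u \<in> ?L then (SOME e'. e' < e \<and> homA I s \<Delta> e' u) else e)" for u
          have deg: "homA I s \<Delta> (deg u) u \<and> (u \<in> ?L \<longrightarrow> deg u < e) \<and> (u \<notin> ?L \<longrightarrow> deg u = e)" if "u \<in> ?G" for u
          proof (cases "u \<in> ?L")
            case True
            then have "\<exists>e'. e' < e \<and> homA I s \<Delta> e' u" by (auto simp: low_def)
            from someI_ex[OF this] True show ?thesis by (simp add: deg_def)
          next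
            case False
            then have "u \<in> insert v ?T" using that by blast
            then have "homA I s \<Delta> e u" using vhom gT by (auto simp: good_def Vdeg_def)
            then show ?thesis using False by (simp add: deg_def)
          qed
          obtain gs as where a: "length as = length gs" "set gs \<subseteq> ?G" "set as \<subseteq> Fcar n"
            "\<forall>t<length gs. as ! t = 0 \<or> (deg (gs ! t) \<le> e \<and> fhom (e - deg (gs ! t)) (as ! t))"
            "vequivA I s (trunc \<Delta> e x) (\<lambda>j. \<Sum>t<length gs. (gs ! t) j * as ! t)"
            using R_trunc[OF I R, where deg=deg and e=e] deg by blast
          have xhom: "homA I s \<Delta> e x" using xT gT by (auto simp: good_def Vdeg_def)
          have x1: "vequivA I s x (\<lambda>j. \<Sum>t<length gs. (gs ! t) j * as ! t)"
            using vA_trans[OF I trunc_equiv[OF I xhom] a(5)] .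
          define lam where "lam = (\<Sum>t<length gs. if gs ! t = v then as ! t else 0)"
          define rest where "rest = (\<lambda>j. \<Sum>t<length gs. if gs ! t = v then 0 else (gs ! t) j * as ! t)"
          have split: "(\<lambda>j. \<Sum>t<length gs. (gs ! t) j * as ! t) = (\<lambda>j. v j * lam + rest j)"
          proof
            fix j
            have "(\<Sum>t<length gs. (gs ! t) j * as ! t) =
              (\<Sum>t<length gs. (if gs ! t = v then v j * as ! t else 0) + (if gs ! t = v then 0 else (gs ! t) j * as ! t))"
              by (rule sum.cong) auto
            also have "\<dots> = v j * lam + rest j"
            proof -
              have l: "v j * lam = (\<Sum>t<length gs. if gs ! t = v then v j * as ! t else 0)"
                unfolding lam_def sum_distrib_left by (rule sum.cong) auto
              show ?thesis unfolding l rest_def by (rule sum.distrib)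
            qed
            finally show "(\<Sum>t<length gs. (gs ! t) j * as ! t) = v j * lam + rest j" .
          qed
          have restR: "rspanA n I s ?G' rest"
            unfolding rest_def
          proof (rule R_sum[OF I])
            fix t assume "t \<in> {..<length gs}"
            then have t: "t < length gs" by simp
            have "gs ! t \<in> set gs" "as ! t \<in> set as" using t a(1) by simp_all
            then have gt: "gs ! t \<in> ?G" "as ! t \<in> Fcar n" using a(2,3) by blast+
            show "rspanA n I s ?G' (\<lambda>j. if gs ! t = v then 0 else (gs ! t) j * as ! t)"
            proof (cases "gs ! t = v")
              case True
              then show ?thesis by (simp add: R_zero[OF I])
            next
              case False
              then have "gs ! t \<in> ?G'" using gt(1) by auto
              then show ?thesis using False R_gen[OF I _ gt(2)] by simp
            qed
          qed
          have lamhom: "fhom 0 lam"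
          proof -
            have "fcomp 0 (if gs ! t = v then as ! t else 0) = (if gs ! t = v then as ! t else 0)" if t: "t < length gs" for t
            proof (cases "gs ! t = v")
              case True
              have "v \<notin> ?L"
              proof
                assume "v \<in> ?L"
                then obtain e' where "e' < e" "homA I s \<Delta> e' v" by (auto simp: low_def)
                with hom_unique[OF I vhom] have "vequivA I s v (\<lambda>j. 0)" by auto
                then have "rspanA n I s (?L \<union> ?T) v" using R_equiv[OF I R_zero[OF I]] by blast
                then show False using nv by blast
              qed
              moreover have "v \<in> ?G"
              proof -
                have "gs ! t \<in> set gs" using t by simp
                then show ?thesis using True a(2) by auto
              qed
              ultimately have "deg v = e" using deg by blast
              then show ?thesis using a(4) t True by (auto simp: fhom_iff)
            qed simp
            then show ?thesis unfolding lam_def fhom_iff fcomp_sum by simp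
          qed
          obtain c0 where lamc: "lam = SG [] c0" using fhom0_single[OF lamhom] by blast
          show False
          proof (cases "c0 = 0")
            case True
            then have "vequivA I s x rest" using x1 split lamc by simp
            then have "rspanA n I s ?G' x" using restR R_equiv[OF I] by blast
            then show False using gT xT unfolding good_def by blast
          next
            case False
            have "vequivA I s x (\<lambda>j. v j * lam + rest j)" using x1 split by simp
            then have "vequivA I s (\<lambda>j. x j - rest j) (\<lambda>j. v j * lam)"
              unfolding vequivA_def by (simp add: algebra_simps)
            then have "vequivA I s (\<lambda>j. (x j - rest j) * SG [] (inverse c0)) (\<lambda>j. v j * lam * SG [] (inverse c0))"
              by (rule vA_rmult[OF I]) (rule Fcar_single, simp)
            moreover have "v j * lam * SG [] (inverse c0) = v j" for j
              using False lamc by (simp add: mult.assoc single_mult_list mult_single_nil_one)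
            ultimately have eqv: "vequivA I s v (\<lambda>j. (x j - rest j) * SG [] (inverse c0))"
              using vA_sym[OF I] by simp
            have "rspanA n I s (?L \<union> ?T) (\<lambda>j. x j - rest j)"
            proof (rule R_diff[OF I])
              have "rspanA n I s (?L \<union> ?T) (\<lambda>i. x i * SG [] 1)"
                using xT by (intro R_gen[OF I] Fcar_single) auto
              then show "rspanA n I s (?L \<union> ?T) x" by (simp add: mult_single_nil_one)
              show "rspanA n I s (?L \<union> ?T) rest" using restR R_mono[OF I] by blast
            qed
            then have "rspanA n I s (?L \<union> ?T) (\<lambda>j. (x j - rest j) * SG [] (inverse c0))"
              by (rule R_rmult[OF I]) (rule Fcar_single, simp)
            then show False using nv eqv R_equiv[OF I] by blast
          qed
        qed
      qed
    qed
  qed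
  then have "insert v ?T = ?T" using Hmax_max by blast
  then show False using vT by blast
qed

end


context
  fixes n r s d :: nat and I :: "'k::field fpoly set" and g :: "nat \<Rightarrow> nat \<Rightarrow> 'k fpoly"
    and \<Delta> :: "nat \<Rightarrow> nat" and Kidx :: "'i set" and hp :: "'i \<Rightarrow> nat \<Rightarrow> 'k cpoly"
    and h :: "'i \<Rightarrow> nat \<Rightarrow> 'k fpoly"
  assumes I: "graded_ideal n I"
    and g_car: "\<forall>j\<in>{1..s}. \<forall>i\<in>{1..r}. g j i \<in> Fcar n"
    and g_hom: "\<forall>j\<in>{1..s}. \<exists>w. vequivA I r (g j) w \<and> (\<forall>i\<in>{1..r}. fhom (\<Delta> j) (w i))"
    and g_deg: "\<forall>j\<in>{1..s}. \<Delta> j \<le> d"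
    and basis: "minbasis_syzSd n I d r s \<Delta> g (Bset n s \<Delta> \<union> hp ` Kidx)"
    and h_car: "\<forall>k\<in>Kidx. \<forall>j\<in>{1..s}. h k j \<in> Fcar n"
    and h_pre: "\<forall>k\<in>Kidx. vequivS n I s (hp k) (\<lambda>j. iota_sh (\<Delta> j) (h k j))"
begin

lemma B1: "x \<in> Bset n s \<Delta> \<union> hp ` Kidx \<Longrightarrow> syzSd n I d r s g x"
  using basis by (simp add: minbasis_syzSd_def)
lemma B2: "x \<in> Bset n s \<Delta> \<union> hp ` Kidx \<Longrightarrow> \<exists>e. homS n I s \<Delta> e x"
  using basis by (simp add: minbasis_syzSd_def)
lemma B3: "syzSd n I d r s g v \<Longrightarrow> spanSd n I d s (Bset n s \<Delta> \<union> hp ` Kidx) v"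
  using basis by (simp add: minbasis_syzSd_def)
lemma B4: "x \<in> Bset n s \<Delta> \<union> hp ` Kidx \<Longrightarrow>
   \<not> spanSd n I d s {w \<in> Bset n s \<Delta> \<union> hp ` Kidx. \<not> vequivS n I s w x} x"
  using basis unfolding minbasis_syzSd_def by blast

lemma gh:
  assumes j: "j \<in> {1..s}" and i: "i \<in> {1..r}"
  shows "g j i - fcomp (\<Delta> j) (g j i) \<in> I"
proof -
  obtain w where w: "vequivA I r (g j) w" "\<forall>i\<in>{1..r}. fhom (\<Delta> j) (w i)" using g_hom j by blast
  then have d: "g j i - w i \<in> I" "fcomp (\<Delta> j) (w i) = w i" using i by (auto simp: vequivA_def fhom_iff)
  have eq: "g j i - fcomp (\<Delta> j) (g j i) = (g j i - w i) - fcomp (\<Delta> j) (g j i - w i)"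
    using d(2) by (simp add: fcomp_diff)
  show ?thesis by (subst eq) (rule I_diff[OF I d(1) I_fcomp[OF I d(1)]])
qed

lemma SZ:
  assumes v: "\<forall>j\<in>{1..s}. v j \<in> Fcar n" and i: "i \<in> {1..r}"
  shows "(\<Sum>j=1..s. g j i * v j) \<in> I \<longleftrightarrow> (\<Sum>j=1..s. iota_sh 0 (g j i) * LPv \<Delta> v j) \<in> LPideal n I"
proof -
  let ?X = "\<Sum>j=1..s. fcomp (\<Delta> j) (g j i) * v j"
  have A: "(\<Sum>j=1..s. g j i * v j) - ?X \<in> I"
  proof -
    have "(\<Sum>j=1..s. g j i * v j) - ?X = (\<Sum>j=1..s. (g j i - fcomp (\<Delta> j) (g j i)) * v j)"
      by (simp add: sum_subtractf left_diff_distrib)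
    also have "\<dots> \<in> I"
      by (rule I_sum[OF I]) (use gh v i in \<open>auto intro: I_rmult[OF I]\<close>)
    finally show ?thesis .
  qed
  have B: "iota_sh 0 ?X = (\<Sum>j=1..s. iota_sh 0 (fcomp (\<Delta> j) (g j i)) * LPv \<Delta> v j)"
    by (simp add: iota_sum iota_mult[OF fhom_fcomp] LPv_def)
  have C: "(\<Sum>j=1..s. iota_sh 0 (g j i) * LPv \<Delta> v j) - iota_sh 0 ?X \<in> LPideal n I"
  proof -
    have "(\<Sum>j=1..s. iota_sh 0 (g j i) * LPv \<Delta> v j) - iota_sh 0 ?X =
       (\<Sum>j=1..s. iota_sh 0 (g j i - fcomp (\<Delta> j) (g j i)) * LPv \<Delta> v j)"
      unfolding B by (simp add: sum_subtractf left_diff_distrib iota_diff)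
    also have "\<dots> \<in> LPideal n I"
    proof (rule LP_sum)
      fix j assume j: "j \<in> {1..s}"
      show "iota_sh 0 (g j i - fcomp (\<Delta> j) (g j i)) * LPv \<Delta> v j \<in> LPideal n I"
        by (rule LP_rmult) (use v j gh[OF j i] in \<open>auto simp: LPv_def intro: Pcar_iota LP_iota\<close>)
    qed
    finally show ?thesis .
  qed
  show ?thesis
  proof
    assume a: "(\<Sum>j=1..s. g j i * v j) \<in> I"
    have "?X \<in> I" using I_diff[OF I a A] by simp
    then have "iota_sh 0 ?X \<in> LPideal n I" by (rule LP_iota)
    then show "(\<Sum>j=1..s. iota_sh 0 (g j i) * LPv \<Delta> v j) \<in> LPideal n I"
      using LP_add[OF C] by fastforce
  next
    assume a: "(\<Sum>j=1..s. iota_sh 0 (g j i) * LPv \<Delta> v j) \<in> LPideal n I"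
    have "iota_sh 0 ?X \<in> LPideal n I" using LP_diff[OF a C] by simp
    then have "?X \<in> I" by (rule iota_inj_LP[OF I])
    then show "(\<Sum>j=1..s. g j i * v j) \<in> I" using I_add[OF I A] by fastforce
  qed
qed

lemma h_LP: "k \<in> Kidx \<Longrightarrow> vequivS n I s (hp k) (LPv \<Delta> (h k))"
  using h_pre by (simp add: LPv_def)

lemma hp_nonzero: "k \<in> Kidx \<Longrightarrow> \<not> vequivS n I s (hp k) (\<lambda>j. 0)"
  using B4[of "hp k"] S_equiv[OF S_zero] by blast

lemma LPv_zero: "LPv \<Delta> (\<lambda>j. 0) = (\<lambda>j. 0)"
  by (simp add: LPv_def)

lemma h_nonzero: "k \<in> Kidx \<Longrightarrow> \<not> vequivA I s (h k) (\<lambda>j. 0)"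
proof
  assume k: "k \<in> Kidx" and z: "vequivA I s (h k) (\<lambda>j. 0)"
  have "vequivS n I s (LPv \<Delta> (h k)) (LPv \<Delta> (\<lambda>j. 0))" by (rule LPv_vA[OF I z])
  then have "vequivS n I s (LPv \<Delta> (h k)) (\<lambda>j. 0)" by (simp only: LPv_zero)
  then show False using hp_nonzero[OF k] h_LP[OF k] vS_trans by blast
qed

lemma h_hom: assumes k: "k \<in> Kidx" shows "\<exists>e. e \<le> d \<and> homA I s \<Delta> e (h k)"
proof -
  obtain e w where w: "vequivS n I s (hp k) w" "\<forall>j\<in>{1..s}. if \<Delta> j \<le> e then phom (e - \<Delta> j) (w j) else w j = 0"
    using B2[of "hp k"] k unfolding homS_def by blast
  have dj: "iota_sh (\<Delta> j) (h k j) - w j \<in> LPideal n I" if j: "j \<in> {1..s}" for j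
    using vS_trans[OF vS_sym[OF h_LP[OF k]] w(1)] j by (simp add: vequivS_def LPv_def)
  have claim1: "h k j - trunc \<Delta> e (h k) j \<in> I" if j: "j \<in> {1..s}" for j
  proof -
    obtain N0 where N0: "\<forall>M\<ge>N0. (\<Sum>l<M. fcomp l (h k j)) = h k j"
      using fcomp_decomp_ex by blast
    define N where "N = max N0 (Suc e)"
    have sumN: "(\<Sum>l<N. fcomp l (h k j)) = h k j" using N0 by (simp add: N_def)
    define cnd where "cnd l = (if \<Delta> j \<le> e then (if l = e - \<Delta> j then fcomp l (h k j) else 0) else 0)" for l
    have each: "fcomp l (h k j) - cnd l \<in> I" for l
    proof (cases "\<Delta> j \<le> e \<and> l = e - \<Delta> j")
      case True
      then show ?thesis by (simp add: cnd_def I_zero[OF I])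
    next
      case False
      have "phi (\<Delta> j) l (iota_sh (\<Delta> j) (h k j) - w j) \<in> I" by (rule phi_LP[OF I dj[OF j]])
      moreover have "phi (\<Delta> j) l (w j) = 0"
      proof (cases "\<Delta> j \<le> e")
        case True
        then have "phom (e - \<Delta> j) (w j)" using w(2) j by fastforce
        then show ?thesis using False True by (intro phi_hom_zero) auto
      next
        case False
        then have "w j = 0" using w(2) j by fastforce
        then show ?thesis by simp
      qed
      ultimately have "fcomp l (h k j) \<in> I" by (simp add: phi_diff phi_iota)
      moreover have "cnd l = 0" using False by (auto simp: cnd_def)
      ultimately show ?thesis by simp
    qed
    have sumc: "(\<Sum>l<N. cnd l) = trunc \<Delta> e (h k) j"
    proof (cases "\<Delta> j \<le> e")
      case True
      have "e - \<Delta> j < N" by (simp add: N_def)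
      then show ?thesis using True unfolding cnd_def trunc_def by (simp add: sum.delta)
    next
      case False
      then show ?thesis unfolding cnd_def trunc_def by simp
    qed
    have "(\<Sum>l<N. fcomp l (h k j) - cnd l) \<in> I" by (rule I_sum[OF I]) (rule each)
    then show ?thesis using sumN sumc by (simp add: sum_subtractf)
  qed
  have hom: "homA I s \<Delta> e (h k)"
    unfolding homA_def
    by (rule exI[where x="trunc \<Delta> e (h k)"]) (use claim1 ishom_trunc[of \<Delta> e "h k"] in \<open>auto simp: vequivA_def ishom_def\<close>)
  have "e \<le> d"
  proof (rule ccontr)
    assume "\<not> e \<le> d"
    then have ed: "d < e" by simp
    obtain w' where w': "vequivS n I s (hp k) w'" "\<forall>j\<in>{1..s}. w' j \<in> Pdcar n d"
      using B1[of "hp k"] k unfolding syzSd_def by blast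
    have "trunc \<Delta> e (h k) j \<in> I" if j: "j \<in> {1..s}" for j
    proof (cases "\<Delta> j \<le> e")
      case True
      have dj': "iota_sh (\<Delta> j) (h k j) - w' j \<in> LPideal n I"
        using vS_trans[OF vS_sym[OF h_LP[OF k]] w'(1)] j by (simp add: vequivS_def LPv_def)
      have "\<Delta> j \<le> d" using g_deg j by blast
      then have "phi (\<Delta> j) (e - \<Delta> j) (w' j) = 0"
        using ed w'(2) j by (intro phi_Pdcar_zero[of _ n d]) auto
      then have "fcomp (e - \<Delta> j) (h k j) \<in> I"
        using phi_LP[OF I dj', of "\<Delta> j" "e - \<Delta> j"] by (simp add: phi_diff phi_iota)
      then show ?thesis using True by (simp add: trunc_def)
    next
      case False
      then show ?thesis by (simp add: trunc_def I_zero[OF I])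
    qed
    then have "vequivA I s (h k) (\<lambda>j. 0)"
      using claim1 unfolding vequivA_def by (metis I_diff_cancel[OF I] diff_zero)
    then show False using h_nonzero[OF k] by blast
  qed
  with hom show ?thesis by blast
qed

definition ek where "ek k = (SOME e. e \<le> d \<and> homA I s \<Delta> e (h k))"

lemma ek: assumes "k \<in> Kidx" shows "ek k \<le> d" "homA I s \<Delta> (ek k) (h k)"
  using someI_ex[OF h_hom[OF assms]] unfolding ek_def by blast+

definition hh where "hh k = trunc \<Delta> (ek k) (h k)"

lemma hh_equiv: "k \<in> Kidx \<Longrightarrow> vequivA I s (h k) (hh k)"
  unfolding hh_def by (rule trunc_equiv[OF I ek(2)])

lemma hh_ishom: "ishom \<Delta> (ek k) (hh k)"
  unfolding hh_def by (rule ishom_trunc)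

lemma hp_hh: "k \<in> Kidx \<Longrightarrow> vequivS n I s (hp k) (LPv \<Delta> (hh k))"
  using vS_trans[OF h_LP LPv_vA[OF I hh_equiv]] by blast

lemma h_syz: assumes k: "k \<in> Kidx" shows "syzA n I r s g (h k)"
proof -
  obtain w' where w': "vequivS n I s (hp k) w'" "\<forall>j\<in>{1..s}. w' j \<in> Pdcar n d"
    "\<forall>i\<in>{1..r}. (\<Sum>j=1..s. iota_sh 0 (g j i) * w' j) \<in> LPideal n I"
    using B1[of "hp k"] k unfolding syzSd_def by blast
  have e: "vequivS n I s (LPv \<Delta> (h k)) w'" using vS_trans[OF vS_sym[OF h_LP[OF k]] w'(1)] .
  have "(\<Sum>j=1..s. fmul (g j i) (h k j)) \<in> I" if i: "i \<in> {1..r}" for i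
  proof -
    have "(\<Sum>j=1..s. iota_sh 0 (g j i) * LPv \<Delta> (h k) j) - (\<Sum>j=1..s. iota_sh 0 (g j i) * w' j)
       = (\<Sum>j=1..s. iota_sh 0 (g j i) * (LPv \<Delta> (h k) j - w' j))"
      by (simp add: sum_subtractf right_diff_distrib)
    also have "\<dots> \<in> LPideal n I"
      by (rule LP_sum, rule LP_lmult) (use e g_car i in \<open>auto simp: vequivS_def intro: Pcar_iota\<close>)
    finally have "(\<Sum>j=1..s. iota_sh 0 (g j i) * LPv \<Delta> (h k) j) \<in> LPideal n I"
      using LP_add[OF _ w'(3)[rule_format, OF i]] by fastforce
    then show ?thesis using SZ[of "h k" i] h_car k i by (simp add: fmul_eq)
  qed
  then show ?thesis using h_car k by (simp add: syzA_def)
qed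


lemma nat_aux1: "(a::nat) \<le> b \<Longrightarrow> a \<le> c \<Longrightarrow> (b - a \<le> c - a) = (b \<le> c)" by linarith
lemma nat_aux2: "(a::nat) \<le> b \<Longrightarrow> a + (b - a) = b" by linarith
lemma nat_aux3: "(a::nat) \<le> b \<Longrightarrow> a \<le> c \<Longrightarrow> c - a - (b - a) = c - b" by linarith

lemma Bset_cases:
  assumes "x \<in> Bset n s \<Delta>"
  obtains j0 k0 l where "1 \<le> j0" "j0 \<le> s" "1 \<le> l" "l \<le> \<Delta> j0" "x = (\<lambda>j'. if j' = j0 then X k0 l else 0)"
  using assms unfolding Bset_def by blast

lemma gen_low:
  assumes v: "syzA n I r s g v" "homA I s \<Delta> e v" and ed: "e \<le> d"
  shows "rspanA n I s (h ` Kidx) v"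
proof -
  define vt where "vt = trunc \<Delta> e v"
  have ev: "vequivA I s v vt" unfolding vt_def by (rule trunc_equiv[OF I v(2)])
  have vF: "\<forall>j\<in>{1..s}. v j \<in> Fcar n" using v(1) by (simp add: syzA_def)
  have vtF: "\<forall>j\<in>{1..s}. vt j \<in> Fcar n" using vF by (simp add: vt_def trunc_def Fcar_fcomp)
  have vtsyz: "(\<Sum>j=1..s. g j i * vt j) \<in> I" if i: "i \<in> {1..r}" for i
  proof -
    have a: "(\<Sum>j=1..s. g j i * v j) \<in> I" using v(1) i by (simp add: syzA_def fmul_eq)
    have "(\<Sum>j=1..s. g j i * v j) - (\<Sum>j=1..s. g j i * vt j) = (\<Sum>j=1..s. g j i * (v j - vt j))"
      by (simp add: sum_subtractf right_diff_distrib)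
    also have "\<dots> \<in> I"
      by (rule I_sum[OF I], rule I_lmult[OF I]) (use g_car i ev in \<open>auto simp: vequivA_def\<close>)
    finally show ?thesis using I_diff[OF I a] by fastforce
  qed
  have LPvt: "LPv \<Delta> vt j \<in> Pdcar n d" if j: "j \<in> {1..s}" for j
  proof (cases "\<Delta> j \<le> e")
    case True
    have "fhom (e - \<Delta> j) (vt j)" using True by (simp add: vt_def trunc_def fhom_fcomp)
    then show ?thesis using vtF j True ed by (auto simp: LPv_def intro!: Pdcar_iota)
  next
    case False
    then show ?thesis by (simp add: LPv_def vt_def trunc_def)
  qed
  have S: "\<forall>i\<in>{1..r}. (\<Sum>j=1..s. iota_sh 0 (g j i) * LPv \<Delta> vt j) \<in> LPideal n I"
  proof
    fix i assume i: "i \<in> {1..r}"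
    show "(\<Sum>j=1..s. iota_sh 0 (g j i) * LPv \<Delta> vt j) \<in> LPideal n I"
      using SZ[OF vtF i] vtsyz[OF i] by simp
  qed
  have "syzSd n I d r s g (LPv \<Delta> vt)"
    unfolding syzSd_def
    by (rule exI[where x="LPv \<Delta> vt"]) (use vS_refl LPvt S in blast)
  from B3[OF this] obtain gs as where a: "length as = length gs" "set gs \<subseteq> Bset n s \<Delta> \<union> hp ` Kidx"
    "set as \<subseteq> Pdcar n d" "vequivS n I s (LPv \<Delta> vt) (\<lambda>i. \<Sum>t<length gs. (gs ! t) i * as ! t)"
    unfolding spanSd_def by blast
  define kt where "kt t = (SOME k. k \<in> Kidx \<and> hp k = gs ! t)" for t
  define bt where "bt t = (if ek (kt t) \<le> e then phi (ek (kt t)) (e - ek (kt t)) (as ! t) else 0)" for t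
  define ct where "ct t = (if gs ! t \<in> hp ` Kidx then (\<lambda>j. h (kt t) j * bt t) else (\<lambda>j. 0))" for t
  have kt: "kt t \<in> Kidx \<and> hp (kt t) = gs ! t" if G: "gs ! t \<in> hp ` Kidx" for t
  proof -
    obtain k where "k \<in> Kidx" "gs ! t = hp k" using G by (rule imageE)
    then have "\<exists>k. k \<in> Kidx \<and> hp k = gs ! t" by (intro exI[where x=k]) simp
    from someI_ex[OF this] show ?thesis unfolding kt_def .
  qed
  have asP: "as ! t \<in> Pdcar n d" if "t < length gs" for t
  proof -
    have "as ! t \<in> set as" using a(1) that by simp
    then show ?thesis using a(3) by blast
  qed
  have gsH: "gs ! t \<in> Bset n s \<Delta> \<union> hp ` Kidx" if "t < length gs" for t
  proof -
    have "gs ! t \<in> set gs" using that by simp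
    then show ?thesis using a(2) by blast
  qed
  have btF: "bt t \<in> Fcar n" if "t < length gs" for t
  proof -
    have "as ! t \<in> Pcar n" by (rule Pdcar_Pcar[OF asP[OF that]])
    then show ?thesis by (simp add: bt_def phi_Fcar)
  qed
  have claim_t: "phi (\<Delta> j) (e - \<Delta> j) ((gs ! t) j * as ! t) - ct t j \<in> I"
    if t: "t < length gs" and j: "j \<in> {1..s}" and Dj: "\<Delta> j \<le> e" for t j
  proof (cases "gs ! t \<in> hp ` Kidx")
    case True
    let ?k = "kt t" and ?a = "as ! t"
    have k: "?k \<in> Kidx" "hp ?k = gs ! t" using kt[OF True] by auto
    have aP: "?a \<in> Pcar n" using asP[OF t] by (rule Pdcar_Pcar)
    have d1: "phi (\<Delta> j) (e - \<Delta> j) ((hp ?k j - LPv \<Delta> (hh ?k) j) * ?a) \<in> I"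
      by (rule phi_LP[OF I], rule LP_rmult[OF aP]) (use hp_hh[OF k(1)] j in \<open>simp add: vequivS_def\<close>)
    have d2: "phi (\<Delta> j) (e - \<Delta> j) (LPv \<Delta> (hh ?k) j * ?a) = hh ?k j * bt t"
    proof (cases "\<Delta> j \<le> ek ?k")
      case True
      have hf: "fhom (ek ?k - \<Delta> j) (hh ?k j)" using hh_ishom[of ?k] True by (simp add: ishom_def)
      have "phi (\<Delta> j) (e - \<Delta> j) (iota_sh (\<Delta> j) (hh ?k j) * ?a) =
         (if ek ?k - \<Delta> j \<le> e - \<Delta> j then hh ?k j * phi (\<Delta> j + (ek ?k - \<Delta> j)) (e - \<Delta> j - (ek ?k - \<Delta> j)) ?a else 0)"
        by (rule phi_prod[OF hf])
      moreover have "(ek ?k - \<Delta> j \<le> e - \<Delta> j) = (ek ?k \<le> e)" by (rule nat_aux1[OF True Dj])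
      moreover have "\<Delta> j + (ek ?k - \<Delta> j) = ek ?k" by (rule nat_aux2[OF True])
      moreover have "e - \<Delta> j - (ek ?k - \<Delta> j) = e - ek ?k" by (rule nat_aux3[OF True Dj])
      ultimately show ?thesis by (simp add: LPv_def bt_def)
    next
      case False
      then have "hh ?k j = 0" by (simp add: hh_def trunc_def)
      then show ?thesis by (simp add: LPv_def)
    qed
    have d3: "hh ?k j * bt t - h ?k j * bt t \<in> I"
      using I_rmult[OF I btF[OF t] I_sym[OF I, of "h ?k j" "hh ?k j"]] hh_equiv[OF k(1)] j
      by (simp add: vequivA_def left_diff_distrib)
    have eq: "phi (\<Delta> j) (e - \<Delta> j) ((gs ! t) j * as ! t) - ct t j =
       phi (\<Delta> j) (e - \<Delta> j) ((hp ?k j - LPv \<Delta> (hh ?k) j) * ?a) + (hh ?k j * bt t - h ?k j * bt t)"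
      using d2 k(2) True by (simp add: ct_def left_diff_distrib phi_diff)
    show ?thesis by (subst eq) (rule I_add[OF I d1 d3])
  next
    case False
    then have "gs ! t \<in> Bset n s \<Delta>" using gsH[OF t] by blast
    then obtain j0 k0 l where B: "1 \<le> l" "l \<le> \<Delta> j0" "gs ! t = (\<lambda>j'. if j' = j0 then X k0 l else 0)"
      by (rule Bset_cases)
    have "phi (\<Delta> j) (e - \<Delta> j) ((gs ! t) j * as ! t) = 0"
    proof (cases "j = j0")
      case True
      then show ?thesis using B phi_Xmult[of l "\<Delta> j"] by simp
    qed (use B in simp)
    then show ?thesis using False by (simp add: ct_def I_zero[OF I])
  qed
  have main: "vequivA I s vt (\<lambda>j. \<Sum>t<length gs. ct t j)"
    unfolding vequivA_def
  proof
    fix j assume j: "j \<in> {1..s}"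
    show "vt j - (\<Sum>t<length gs. ct t j) \<in> I"
    proof (cases "\<Delta> j \<le> e")
      case True
      have "phi (\<Delta> j) (e - \<Delta> j) (LPv \<Delta> vt j) = vt j"
        using True by (simp add: LPv_def phi_iota vt_def trunc_def fcomp_fcomp)
      moreover have "phi (\<Delta> j) (e - \<Delta> j) (LPv \<Delta> vt j - (\<Sum>t<length gs. (gs ! t) j * as ! t)) \<in> I"
        by (rule phi_LP[OF I]) (use a(4) j in \<open>simp add: vequivS_def\<close>)
      ultimately have d1: "vt j - (\<Sum>t<length gs. phi (\<Delta> j) (e - \<Delta> j) ((gs ! t) j * as ! t)) \<in> I"
        by (simp add: phi_diff phi_sum)
      have d2: "(\<Sum>t<length gs. phi (\<Delta> j) (e - \<Delta> j) ((gs ! t) j * as ! t) - ct t j) \<in> I"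
        by (rule I_sum[OF I]) (use claim_t j True in auto)
      show ?thesis using I_add[OF I d1 d2] by (simp add: sum_subtractf)
    next
      case False
      have "ct t j \<in> I" if t: "t < length gs" for t
      proof (cases "gs ! t \<in> hp ` Kidx \<and> ek (kt t) \<le> e")
        case True
        then have k: "kt t \<in> Kidx" using kt by blast
        have "hh (kt t) j = 0" using True False by (simp add: hh_def trunc_def)
        moreover have "h (kt t) j - hh (kt t) j \<in> I" using hh_equiv[OF k] j unfolding vequivA_def by blast
        ultimately have "h (kt t) j \<in> I" by simp
        then show ?thesis using True I_rmult[OF I btF[OF t]] by (simp add: ct_def)
      next
        case False
        then show ?thesis by (auto simp: ct_def bt_def I_zero[OF I])
      qed
      then have "(\<Sum>t<length gs. ct t j) \<in> I" by (intro I_sum[OF I]) auto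
      then show ?thesis using False I_uminus[OF I] by (simp add: vt_def trunc_def)
    qed
  qed
  have "rspanA n I s (h ` Kidx) (\<lambda>j. \<Sum>t\<in>{..<length gs}. ct t j)"
  proof (rule R_sum[OF I])
    fix t assume "t \<in> {..<length gs}"
    then have t: "t < length gs" by simp
    show "rspanA n I s (h ` Kidx) (ct t)"
    proof (cases "gs ! t \<in> hp ` Kidx")
      case True
      then show ?thesis using kt[OF True] btF[OF t] by (simp add: ct_def R_gen[OF I])
    qed (simp add: ct_def R_zero[OF I])
  qed
  then show ?thesis using R_equiv[OF I] vA_trans[OF I ev main] by blast
qed


lemma min_low:
  assumes k: "k \<in> Kidx"
    and Hh: "\<forall>u\<in>H. homA I s \<Delta> (deg u) u"
    and Hd: "\<forall>u\<in>H. deg u \<le> d \<longrightarrow> (\<exists>k'\<in>Kidx. u = h k' \<and> deg u = ek k')"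
  shows "\<not> rspanA n I s {w\<in>H. \<not> vequivA I s w (h k)} (h k)"
proof
  let ?G = "{w\<in>H. \<not> vequivA I s w (h k)}"
  let ?E = "ek k"
  assume R: "rspanA n I s ?G (h k)"
  have degG: "homA I s \<Delta> (deg u) u" if "u \<in> ?G" for u using Hh that by blast
  from R_trunc[OF I R degG, where e="?E"] obtain gs as where a: "length as = length gs" "set gs \<subseteq> ?G" "set as \<subseteq> Fcar n"
    "\<forall>t<length gs. as ! t = 0 \<or> (deg (gs ! t) \<le> ?E \<and> fhom (?E - deg (gs ! t)) (as ! t))"
    "vequivA I s (trunc \<Delta> ?E (h k)) (\<lambda>j. \<Sum>t<length gs. (gs ! t) j * as ! t)"
    by blast
  have hkE: "vequivA I s (h k) (\<lambda>j. \<Sum>t<length gs. (gs ! t) j * as ! t)"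
    using vA_trans[OF I trunc_equiv[OF I ek(2)[OF k]] a(5)] .
  have LPeq: "vequivS n I s (hp k) (\<lambda>j. \<Sum>t\<in>{..<length gs}. LPv \<Delta> (\<lambda>j. (gs ! t) j * as ! t) j)"
  proof -
    have "vequivS n I s (LPv \<Delta> (h k)) (LPv \<Delta> (\<lambda>j. \<Sum>t<length gs. (gs ! t) j * as ! t))"
      by (rule LPv_vA[OF I hkE])
    moreover have "LPv \<Delta> (\<lambda>j. \<Sum>t<length gs. (gs ! t) j * as ! t) = (\<lambda>j. \<Sum>t\<in>{..<length gs}. LPv \<Delta> (\<lambda>j. (gs ! t) j * as ! t) j)"
      by (simp add: LPv_def iota_sum)
    ultimately show ?thesis using vS_trans[OF h_LP[OF k]] by simp
  qed
  let ?G' = "{w \<in> Bset n s \<Delta> \<union> hp ` Kidx. \<not> vequivS n I s w (hp k)}"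
  have "spanSd n I d s ?G' (\<lambda>j. \<Sum>t\<in>{..<length gs}. LPv \<Delta> (\<lambda>j. (gs ! t) j * as ! t) j)"
  proof (rule S_sum)
    fix t assume "t \<in> {..<length gs}"
    then have t: "t < length gs" by simp
    have "gs ! t \<in> set gs" "as ! t \<in> set as" using t a(1) by simp_all
    then have gt: "gs ! t \<in> ?G" "as ! t \<in> Fcar n" using a(2,3) by blast+
    show "spanSd n I d s ?G' (LPv \<Delta> (\<lambda>j. (gs ! t) j * as ! t))"
    proof (cases "as ! t = 0")
      case True
      then show ?thesis by (simp add: LPv_def S_zero)
    next
      case False
      then have dg: "deg (gs ! t) \<le> ?E" and fh: "fhom (?E - deg (gs ! t)) (as ! t)" using a(4) t by auto
      have "deg (gs ! t) \<le> d" using dg ek(1)[OF k] by simp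
      moreover have "gs ! t \<in> H" using gt(1) by simp
      ultimately obtain k' where k': "k' \<in> Kidx" "gs ! t = h k'" "deg (gs ! t) = ek k'" using Hd by blast
      let ?a = "iota_sh (ek k') (as ! t)"
      have "ek k' + (?E - ek k') \<le> d" using dg k'(3) ek(1)[OF k] by simp
      then have aP: "?a \<in> Pdcar n d" using Pdcar_iota[OF gt(2)] fh k'(3) by simp
      have e1: "vequivS n I s (LPv \<Delta> (\<lambda>j. h k' j * as ! t)) (LPv \<Delta> (\<lambda>j. hh k' j * as ! t))"
        by (rule LPv_vA[OF I], rule vA_rmult[OF I hh_equiv[OF k'(1)] gt(2)])
      have e2: "LPv \<Delta> (\<lambda>j. hh k' j * as ! t) = (\<lambda>j. LPv \<Delta> (hh k') j * ?a)"
        using LPv_mult[OF hh_ishom] by (simp add: fun_eq_iff)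
      have e3: "vequivS n I s (\<lambda>j. LPv \<Delta> (hh k') j * ?a) (\<lambda>j. hp k' j * ?a)"
        by (rule vS_rmult[OF vS_sym[OF hp_hh[OF k'(1)]] Pdcar_Pcar[OF aP]])
      have nq: "\<not> vequivS n I s (hp k') (hp k)"
      proof
        assume q: "vequivS n I s (hp k') (hp k)"
        have "vequivS n I s (LPv \<Delta> (h k')) (hp k)" using vS_trans[OF vS_sym[OF h_LP[OF k'(1)]] q] .
        then have "vequivS n I s (LPv \<Delta> (h k')) (LPv \<Delta> (h k))" using vS_trans[OF _ h_LP[OF k]] by blast
        then have "vequivA I s (h k') (h k)" by (rule LPv_inj[OF I])
        then show False using gt(1) k'(2) by simp
      qed
      have "hp k' \<in> hp ` Kidx" using k'(1) by (rule imageI)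
      then have mem: "hp k' \<in> ?G'" using nq by simp
      have "spanSd n I d s ?G' (\<lambda>j. hp k' j * ?a)" by (rule S_gen[OF mem aP])
      then have "spanSd n I d s ?G' (\<lambda>j. LPv \<Delta> (hh k') j * ?a)" using e3 S_equiv by blast
      then have "spanSd n I d s ?G' (LPv \<Delta> (\<lambda>j. hh k' j * as ! t))" using e2 by simp
      then have "spanSd n I d s ?G' (LPv \<Delta> (\<lambda>j. h k' j * as ! t))" using e1 S_equiv by blast
      then show ?thesis using k'(2) by simp
    qed
  qed
  then have "spanSd n I d s ?G' (hp k)" using S_equiv LPeq by blast
  moreover have "hp k \<in> Bset n s \<Delta> \<union> hp ` Kidx" using k by simp
  ultimately show False using B4 by blast
qed

lemma syz_trunc:
  assumes v: "syzA n I r s g v"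
  shows "syzA n I r s g (trunc \<Delta> e v)"
proof -
  have vF: "\<forall>j\<in>{1..s}. v j \<in> Fcar n" using v by (simp add: syzA_def)
  have tF: "trunc \<Delta> e v j \<in> Fcar n" if "j \<in> {1..s}" for j
    using vF that by (simp add: trunc_def Fcar_fcomp)
  have "(\<Sum>j=1..s. g j i * trunc \<Delta> e v j) \<in> I" if i: "i \<in> {1..r}" for i
  proof -
    let ?gh = "\<lambda>j. fcomp (\<Delta> j) (g j i)"
    have a: "(\<Sum>j=1..s. g j i * v j) \<in> I" using v i by (simp add: syzA_def fmul_eq)
    have b: "(\<Sum>j=1..s. (g j i - ?gh j) * v j) \<in> I"
      by (rule I_sum[OF I]) (use gh i vF in \<open>auto intro: I_rmult[OF I]\<close>)
    have "(\<Sum>j=1..s. ?gh j * v j) = (\<Sum>j=1..s. g j i * v j) - (\<Sum>j=1..s. (g j i - ?gh j) * v j)"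
      by (simp add: sum_subtractf left_diff_distrib)
    then have c: "(\<Sum>j=1..s. ?gh j * v j) \<in> I" using I_diff[OF I a b] by simp
    have d: "fcomp e (?gh j * v j) = ?gh j * trunc \<Delta> e v j" for j
    proof (cases "\<Delta> j \<le> e")
      case True
      then have "e = \<Delta> j + (e - \<Delta> j)" by simp
      then have "fcomp e (?gh j * v j) = fcomp (\<Delta> j + (e - \<Delta> j)) (?gh j * v j)" by simp
      also have "\<dots> = ?gh j * fcomp (e - \<Delta> j) (v j)" by (rule fcomp_mult_hom[OF fhom_fcomp])
      finally show ?thesis using True by (simp add: trunc_def)
    next
      case False
      then show ?thesis using fcomp_mult_hom0[OF fhom_fcomp, of e "\<Delta> j"] by (simp add: trunc_def)
    qed
    have e: "(\<Sum>j=1..s. ?gh j * trunc \<Delta> e v j) \<in> I"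
      using I_fcomp[OF I c, of e] by (simp add: fcomp_sum d)
    have f: "(\<Sum>j=1..s. (g j i - ?gh j) * trunc \<Delta> e v j) \<in> I"
      by (rule I_sum[OF I]) (use gh i tF in \<open>auto intro: I_rmult[OF I]\<close>)
    have "(\<Sum>j=1..s. g j i * trunc \<Delta> e v j) = (\<Sum>j=1..s. ?gh j * trunc \<Delta> e v j) + (\<Sum>j=1..s. (g j i - ?gh j) * trunc \<Delta> e v j)"
      by (simp add: sum.distrib[symmetric] left_diff_distrib)
    then show ?thesis using I_add[OF I e f] by simp
  qed
  then show ?thesis using tF by (simp add: syzA_def fmul_eq)
qed


lemma main_ctx:
  "\<exists>H. minbasis_syzA n I r s \<Delta> g H \<and>
           (\<forall>v\<in>H. (\<exists>e\<le>d. homA I s \<Delta> e v) \<longrightarrow> (\<exists>k\<in>Kidx. vequivA I s v (h k))) \<and>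
           (\<forall>k\<in>Kidx. \<exists>v\<in>H. (\<exists>e\<le>d. homA I s \<Delta> e v) \<and> vequivA I s v (h k))"
proof -
  define HH where "HH e = Hmax n I r s \<Delta> g e" for e
  define H where "H = h ` Kidx \<union> (\<Union>e\<in>{e. d < e}. HH e)"
  have goodHH: "good n I r s \<Delta> g e (HH e)" for e unfolding HH_def by (rule Hmax_good[OF I])
  have HHV: "syzA n I r s g u \<and> homA I s \<Delta> e u" if "u \<in> HH e" for u e
  proof -
    have "HH e \<subseteq> Vdeg n I r s \<Delta> g e" using goodHH[of e] unfolding good_def by (rule conjunct1)
    then show ?thesis using that unfolding Vdeg_def by auto
  qed
  have HHnz: "\<not> vequivA I s u (\<lambda>j. 0)" if "u \<in> HH e" for u e
    by (rule good_nonzero[OF I goodHH that])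
  have Hcases: "(\<exists>k. k \<in> Kidx \<and> u = h k) \<or> (\<exists>e. d < e \<and> u \<in> HH e)" if "u \<in> H" for u
  proof -
    have "u \<in> h ` Kidx \<or> u \<in> (\<Union>e\<in>{e. d < e}. HH e)" using that unfolding H_def by (simp only: Un_iff)
    then show ?thesis
    proof
      assume "u \<in> h ` Kidx"
      then obtain k where "k \<in> Kidx" "u = h k" by (rule imageE) auto
      then show ?thesis by auto
    next
      assume "u \<in> (\<Union>e\<in>{e. d < e}. HH e)"
      then obtain e where "e \<in> {e. d < e}" "u \<in> HH e" by (rule UN_E)
      then show ?thesis by auto
    qed
  qed
  have hH: "h k \<in> H" if "k \<in> Kidx" for k
    unfolding H_def by (rule UnI1, rule imageI, rule that)
  have HHH: "u \<in> H" if "u \<in> HH e" "d < e" for u e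
    unfolding H_def by (rule UnI2, rule UN_I[of e]) (use that in auto)
  define degH where "degH u = (if (\<exists>k. k \<in> Kidx \<and> u = h k) then ek (SOME k. k \<in> Kidx \<and> u = h k)
      else (SOME e. d < e \<and> u \<in> HH e))" for u
  have degH: "homA I s \<Delta> (degH u) u \<and> (degH u \<le> d \<longrightarrow> (\<exists>k'\<in>Kidx. u = h k' \<and> degH u = ek k'))"
    if u: "u \<in> H" for u
  proof (cases "\<exists>k. k \<in> Kidx \<and> u = h k")
    case True
    let ?k = "SOME k. k \<in> Kidx \<and> u = h k"
    have k: "?k \<in> Kidx \<and> u = h ?k" by (rule someI_ex[OF True])
    have dg: "degH u = ek ?k" unfolding degH_def by (rule if_P[OF True])
    have "homA I s \<Delta> (degH u) u" using ek(2)[of ?k] k dg by simp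
    moreover have "\<exists>k'\<in>Kidx. u = h k' \<and> degH u = ek k'" using k dg by auto
    ultimately show ?thesis by simp
  next
    case False
    have ex: "\<exists>e. d < e \<and> u \<in> HH e" using Hcases[OF u] False by (elim disjE) simp_all
    have dg: "degH u = (SOME e. d < e \<and> u \<in> HH e)" unfolding degH_def by (rule if_not_P[OF False])
    have "d < degH u \<and> u \<in> HH (degH u)" unfolding dg by (rule someI_ex[OF ex])
    then show ?thesis using HHV by auto
  qed
  have degH1: "homA I s \<Delta> (degH u) u" if "u \<in> H" for u using degH[OF that] by simp
  have degH2: "\<forall>u\<in>H. degH u \<le> d \<longrightarrow> (\<exists>k'\<in>Kidx. u = h k' \<and> degH u = ek k')" using degH by simp
  have Hsyz: "syzA n I r s g u" if "u \<in> H" for u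
    using Hcases[OF that] h_syz HHV by auto
  have Hgen1: "rspanA n I s H u" if "u \<in> H" for u
  proof -
    have "rspanA n I s H (\<lambda>i. u i * SG [] 1)" by (rule R_gen[OF I that Fcar_single]) simp
    then show ?thesis by (simp add: mult_single_nil_one)
  qed
  have genV: "\<forall>u. u \<in> Vdeg n I r s \<Delta> g e \<longrightarrow> rspanA n I s H u" for e
  proof (induction e rule: less_induct)
    case (less e)
    show ?case
    proof (intro allI impI)
      fix u assume u: "u \<in> Vdeg n I r s \<Delta> g e"
      show "rspanA n I s H u"
      proof (cases "e \<le> d")
        case True
        have "syzA n I r s g u" "homA I s \<Delta> e u" using u by (simp_all add: Vdeg_def)
        then have "rspanA n I s (h ` Kidx) u" using gen_low True by blast
        moreover have "h ` Kidx \<subseteq> H" unfolding H_def by (rule Un_upper1)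
        ultimately show ?thesis by (rule R_mono[OF I])
      next
        case False
        have R: "rspanA n I s (low n I r s \<Delta> g e \<union> HH e) u"
          using Hmax_span[OF I u] by (simp add: HH_def)
        show ?thesis
        proof (rule R_trans[OF I R])
          fix u' assume u': "u' \<in> low n I r s \<Delta> g e \<union> HH e"
          show "rspanA n I s H u'"
          proof (cases "u' \<in> HH e")
            case True
            have "u' \<in> H" using HHH[OF True] False by simp
            then show ?thesis by (rule Hgen1)
          next
            case False
            then have "u' \<in> low n I r s \<Delta> g e" using u' by simp
            then obtain e' where "e' < e" "syzA n I r s g u'" "homA I s \<Delta> e' u'"
              by (auto simp: low_def)
            then show ?thesis using less by (auto simp: Vdeg_def)
          qed
        qed
      qed
    qed
  qed
  have gen: "rspanA n I s H v" if v: "syzA n I r s g v" for v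
  proof -
    obtain N where N: "\<forall>j\<in>{1..s}. (\<Sum>e<N. trunc \<Delta> e v j) = v j" using trunc_decomp by blast
    have "rspanA n I s H (\<lambda>j. \<Sum>e\<in>{..<N}. trunc \<Delta> e v j)"
    proof (rule R_sum[OF I])
      fix e assume "e \<in> {..<N}"
      have "trunc \<Delta> e v \<in> Vdeg n I r s \<Delta> g e"
        using syz_trunc[OF v] homA_trunc[OF I] by (simp add: Vdeg_def)
      then show "rspanA n I s H (trunc \<Delta> e v)" using genV by blast
    qed
    moreover have "vequivA I s v (\<lambda>j. \<Sum>e\<in>{..<N}. trunc \<Delta> e v j)"
      using N by (simp add: vequivA_def I_zero[OF I])
    ultimately show ?thesis using R_equiv[OF I] by blast
  qed
  have minim: "\<not> rspanA n I s {w\<in>H. \<not> vequivA I s w x} x" if x: "x \<in> H" for x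
  proof (cases "\<exists>k. k \<in> Kidx \<and> x = h k")
    case True
    then obtain k where k: "k \<in> Kidx" "x = h k" by blast
    have "\<forall>u\<in>H. homA I s \<Delta> (degH u) u" using degH1 by blast
    from min_low[OF k(1) this degH2] show ?thesis using k(2) by simp
  next
    case False
    then obtain e where e: "d < e" "x \<in> HH e" using Hcases[OF x] by blast
    show ?thesis
    proof
      assume R: "rspanA n I s {w\<in>H. \<not> vequivA I s w x} x"
      have degG: "homA I s \<Delta> (degH u) u" if "u \<in> {w\<in>H. \<not> vequivA I s w x}" for u
        using degH1 that by simp
      from R_trunc[OF I R degG, where e=e] obtain gs as where a: "length as = length gs"
        "set gs \<subseteq> {w\<in>H. \<not> vequivA I s w x}" "set as \<subseteq> Fcar n"
        "\<forall>t<length gs. as ! t = 0 \<or> (degH (gs ! t) \<le> e \<and> fhom (e - degH (gs ! t)) (as ! t))"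
        "vequivA I s (trunc \<Delta> e x) (\<lambda>j. \<Sum>t<length gs. (gs ! t) j * as ! t)"
        by blast
      have xh: "homA I s \<Delta> e x" using HHV[OF e(2)] by simp
      have xe: "vequivA I s x (\<lambda>j. \<Sum>t<length gs. (gs ! t) j * as ! t)"
        by (rule vA_trans[OF I trunc_equiv[OF I xh] a(5)])
      let ?L = "low n I r s \<Delta> g e \<union> {w \<in> HH e. \<not> vequivA I s w x}"
      have "rspanA n I s ?L (\<lambda>j. \<Sum>t\<in>{..<length gs}. (gs ! t) j * as ! t)"
      proof (rule R_sum[OF I])
        fix t assume "t \<in> {..<length gs}"
        then have t: "t < length gs" by simp
        have "gs ! t \<in> set gs" "as ! t \<in> set as" using t a(1) by simp_all
        then have gt0: "gs ! t \<in> {w\<in>H. \<not> vequivA I s w x}" "as ! t \<in> Fcar n" using a(2,3) by (auto simp only: subset_iff)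
        then have gt: "gs ! t \<in> H" "\<not> vequivA I s (gs ! t) x" "as ! t \<in> Fcar n" by simp_all
        show "rspanA n I s ?L (\<lambda>j. (gs ! t) j * as ! t)"
        proof (cases "as ! t = 0")
          case True
          then show ?thesis by (simp add: R_zero[OF I])
        next
          case False
          then have dle: "degH (gs ! t) \<le> e" using a(4) t by auto
          have hd: "homA I s \<Delta> (degH (gs ! t)) (gs ! t)" using degH1[OF gt(1)] .
          show ?thesis
          proof (cases "degH (gs ! t) < e")
            case True
            then have "gs ! t \<in> low n I r s \<Delta> g e" using Hsyz[OF gt(1)] hd by (auto simp: low_def)
            then have "gs ! t \<in> ?L" by simp
            then show ?thesis by (rule R_gen[OF I _ gt(3)])
          next
            case False
            then have de: "degH (gs ! t) = e" using dle by simp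
            have nk: "\<not> (\<exists>k. k \<in> Kidx \<and> gs ! t = h k)"
            proof
              assume "\<exists>k. k \<in> Kidx \<and> gs ! t = h k"
              then obtain k where k: "k \<in> Kidx" "gs ! t = h k" by blast
              have "homA I s \<Delta> (ek k) (gs ! t)" using ek(2)[OF k(1)] k(2) by simp
              moreover have "ek k \<noteq> e" using ek(1)[OF k(1)] e(1) by simp
              ultimately have "vequivA I s (gs ! t) (\<lambda>j. 0)" using hom_unique[OF I _ hd] de by simp
              then show False using h_nonzero[OF k(1)] k(2) by simp
            qed
            then obtain e' where e': "d < e'" "gs ! t \<in> HH e'" using Hcases[OF gt(1)] by blast
            have "e' = e"
            proof (rule ccontr)
              assume ne: "e' \<noteq> e"
              have "homA I s \<Delta> e' (gs ! t)" using HHV[OF e'(2)] by simp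
              then have "vequivA I s (gs ! t) (\<lambda>j. 0)" using hom_unique[OF I _ hd] de ne by simp
              then show False using HHnz[OF e'(2)] by simp
            qed
            then have "gs ! t \<in> ?L" using e'(2) gt(2) by simp
            then show ?thesis by (rule R_gen[OF I _ gt(3)])
          qed
        qed
      qed
      then have "rspanA n I s ?L x" using xe R_equiv[OF I] by blast
      moreover have "\<not> rspanA n I s ?L x" using goodHH[of e] e(2) unfolding good_def by blast
      ultimately show False by simp
    qed
  qed
  have mb: "minbasis_syzA n I r s \<Delta> g H"
    unfolding minbasis_syzA_def
  proof (intro conjI ballI allI impI)
    fix u assume "u \<in> H" then show "syzA n I r s g u" by (rule Hsyz)
  next
    fix u assume "u \<in> H" then show "\<exists>e. homA I s \<Delta> e u" using degH1 by blast
  next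
    fix v assume "syzA n I r s g v" then show "rspanA n I s H v" by (rule gen)
  next
    fix u assume "u \<in> H" then show "\<not> rspanA n I s {w \<in> H. \<not> vequivA I s w u} u" by (rule minim)
  qed
  have c2: "\<forall>v\<in>H. (\<exists>e\<le>d. homA I s \<Delta> e v) \<longrightarrow> (\<exists>k\<in>Kidx. vequivA I s v (h k))"
  proof (intro ballI impI)
    fix v assume v: "v \<in> H" and "\<exists>e\<le>d. homA I s \<Delta> e v"
    then obtain e' where e': "e' \<le> d" "homA I s \<Delta> e' v" by blast
    show "\<exists>k\<in>Kidx. vequivA I s v (h k)"
    proof (cases "\<exists>k. k \<in> Kidx \<and> v = h k")
      case True
      then obtain k where "k \<in> Kidx" "v = h k" by blast
      then show ?thesis using vA_refl[OF I, of s "h k"] by blast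
    next
      case False
      then obtain e where e: "d < e" "v \<in> HH e" using Hcases[OF v] by blast
      have ne: "e' \<noteq> e" using e e'(1) by simp
      have "homA I s \<Delta> e v" using HHV[OF e(2)] by simp
      then have "vequivA I s v (\<lambda>j. 0)" by (rule hom_unique[OF I e'(2) _ ne])
      then show ?thesis using HHnz[OF e(2)] by simp
    qed
  qed
  have c3: "\<forall>k\<in>Kidx. \<exists>v\<in>H. (\<exists>e\<le>d. homA I s \<Delta> e v) \<and> vequivA I s v (h k)"
  proof
    fix k assume k: "k \<in> Kidx"
    have "(\<exists>e\<le>d. homA I s \<Delta> e (h k)) \<and> vequivA I s (h k) (h k)" using ek[OF k] vA_refl[OF I] by blast
    then show "\<exists>v\<in>H. (\<exists>e\<le>d. homA I s \<Delta> e v) \<and> vequivA I s v (h k)" using hH[OF k] by blast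
  qed
  show ?thesis using mb c2 c3 by blast
qed

end


theorem mainTheorem13:
  fixes n r s d :: nat
    and I :: "'k::field fpoly set"
    and g :: "nat \<Rightarrow> nat \<Rightarrow> 'k fpoly"
    and \<Delta> :: "nat \<Rightarrow> nat"
    and Kidx :: "'i set"
    and hp :: "'i \<Rightarrow> nat \<Rightarrow> 'k cpoly"
    and h :: "'i \<Rightarrow> nat \<Rightarrow> 'k fpoly"
  assumes I: "graded_ideal n I"
    and g_car: "\<forall>j\<in>{1..s}. \<forall>i\<in>{1..r}. g j i \<in> Fcar n"
    and g_hom: "\<forall>j\<in>{1..s}. \<exists>w. vequivA I r (g j) w \<and> (\<forall>i\<in>{1..r}. fhom (\<Delta> j) (w i))"
    and g_deg: "\<forall>j\<in>{1..s}. \<Delta> j \<le> d"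
    and g_min: "\<forall>j\<in>{1..s}. \<not> rspanA n I r (g ` ({1..s} - {j})) (g j)"
    and basis: "minbasis_syzSd n I d r s \<Delta> g (Bset n s \<Delta> \<union> hp ` Kidx)"
    and h_car: "\<forall>k\<in>Kidx. \<forall>j\<in>{1..s}. h k j \<in> Fcar n"
    and h_pre: "\<forall>k\<in>Kidx. vequivS n I s (hp k) (\<lambda>j. iota_sh (\<Delta> j) (h k j))"
  shows "\<exists>H. minbasis_syzA n I r s \<Delta> g H \<and>
           (\<forall>v\<in>H. (\<exists>e\<le>d. homA I s \<Delta> e v) \<longrightarrow> (\<exists>k\<in>Kidx. vequivA I s v (h k))) \<and>
           (\<forall>k\<in>Kidx. \<exists>v\<in>H. (\<exists>e\<le>d. homA I s \<Delta> e v) \<and> vequivA I s v (h k))"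
  using I g_car g_hom g_deg basis h_car h_pre by (rule main_ctx)

end
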